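(* Let $F$ be a field, $A$ a free abelian group with basis $\{x_1,\dots,x_n\}$, $F * A$ a twisted group algebra of $A$ over $F$, and $M$ a finitely generated (right) $F * A$-module with $\mathrm{gk}(M)=r$, where $0<r<n$. Let $\{i_1,\dots,i_r\}\subseteq\{1,\dots,n\}$ be such that $M$ is not torsion as an $F * \langle x_{i_1},\dots,x_{i_r}\rangle$-module, let $\{j_1,\dots,j_{n-r}\}$ be the complement of $\{i_1,\dots,i_r\}$ in $\{1,\dots,n\}$, and set $\mathcal S = F * \langle x_{i_1},\dots,x_{i_r}\rangle\setminus\{0\}$. Let $D$ be the quotient division ring of $F * \langle x_{i_1},\dots,x_{i_r}\rangle$, so that the localization $(F * A)\mathcal S^{-1}$ is a crossed product $D * \langle x_{j_1},\dots,x_{j_{n-r}}\rangle$. Then $M\mathcal S^{-1}$ is a nonzero $D * \langle x_{j_1},\dots,x_{j_{n-r}}\rangle$-module which is finite dimensional as a $D$-vector space.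
   Context: A twisted group algebra $F * A$ of a finitely generated free abelian group $A$ over a field $F$ is an associative $F$-algebra with an $F$-basis $\{\bar a : a \in A\}$ such that $\bar a_1 \bar a_2 = \tau(a_1,a_2)\overline{a_1a_2}$ with $\tau: A\times A\to F\setminus\{0\}$ a 2-cocycle. For a subgroup $B\le A$, $F * B$ is the subalgebra spanned by $\{\bar b: b\in B\}$; $F * B\setminus\{0\}$ is an Ore subset of $F * A$. A module $M$ is torsion as an $F * B$-module if every element of $M$ is annihilated by some nonzero element of $F * B$. A crossed product $D * C$ of an abelian group $C$ over a division ring $D$ is a ring with a $D$-basis $\{\bar c: c\in C\}$ with $\bar c_1\bar c_2=\tau(c_1,c_2)\overline{c_1c_2}$ ($\tau(c_1,c_2)\in D\setminus\{0\}$) and $\bar c d=\sigma_c(d)\bar c$ for automorphisms $\sigma_c$ of $D$. $\mathrm{gk}(M)$ denotes the Gelfand–Kirillov dimension of $M$ (measured over $F$); for finitely generated modules it equals the supremum of the ranks of subgroups $B\le A$ such that $M$ is not $F * B$-torsion. $M\mathcal S^{-1}$ denotes the localized module $M\otimes_{F * A}(F * A)\mathcal S^{-1}$. *)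

theory Defs
  imports Complex_Main "HOL-Library.Extended_Real" "HOL-Library.Liminf_Limsup"
begin

text \<open>The free abelian group A with basis x_i (i in the finite index type 'i) is
  realised as 'i => int; x_i is the indicator of i. Group operation is pointwise addition.\<close>

definition gzero :: "'i \<Rightarrow> int" where "gzero = (\<lambda>i. 0)"
definition gadd :: "('i \<Rightarrow> int) \<Rightarrow> ('i \<Rightarrow> int) \<Rightarrow> ('i \<Rightarrow> int)" where
  "gadd a b = (\<lambda>i. a i + b i)"
definition gdiff :: "('i \<Rightarrow> int) \<Rightarrow> ('i \<Rightarrow> int) \<Rightarrow> ('i \<Rightarrow> int)" where
  "gdiff a b = (\<lambda>i. a i - b i)"

definition subgrp :: "'i set \<Rightarrow> ('i \<Rightarrow> int) set" where
  "subgrp I = {a. \<forall>j. j \<notin> I \<longrightarrow> a j = 0}"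

definition two_cocycle :: "(('i \<Rightarrow> int) \<Rightarrow> ('i \<Rightarrow> int) \<Rightarrow> 'f::field) \<Rightarrow> bool" where
  "two_cocycle \<tau> \<longleftrightarrow> (\<forall>a b. \<tau> a b \<noteq> 0) \<and>
     (\<forall>a b c. \<tau> a b * \<tau> (gadd a b) c = \<tau> b c * \<tau> a (gadd b c))"

text \<open>Elements of F*A: finitely supported coefficient functions; F*B = those supported in B.\<close>
definition tga_carrier :: "('i \<Rightarrow> int) set \<Rightarrow> (('i \<Rightarrow> int) \<Rightarrow> 'f::field) set" where
  "tga_carrier B = {p. finite {a. p a \<noteq> 0} \<and> {a. p a \<noteq> 0} \<subseteq> B}"

definition tga_zero :: "('i \<Rightarrow> int) \<Rightarrow> 'f::field" where "tga_zero = (\<lambda>a. 0)"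

definition tga_add :: "(('i \<Rightarrow> int) \<Rightarrow> 'f::field) \<Rightarrow> (('i \<Rightarrow> int) \<Rightarrow> 'f) \<Rightarrow> (('i \<Rightarrow> int) \<Rightarrow> 'f)" where
  "tga_add p q = (\<lambda>a. p a + q a)"

text \<open>Multiplication: bar a1 * bar a2 = tau(a1,a2) bar(a1 a2), extended F-bilinearly.\<close>
definition tga_mult :: "(('i \<Rightarrow> int) \<Rightarrow> ('i \<Rightarrow> int) \<Rightarrow> 'f::field) \<Rightarrow>
    (('i \<Rightarrow> int) \<Rightarrow> 'f) \<Rightarrow> (('i \<Rightarrow> int) \<Rightarrow> 'f) \<Rightarrow> (('i \<Rightarrow> int) \<Rightarrow> 'f)" where
  "tga_mult \<tau> p q = (\<lambda>c. \<Sum>a\<in>{a. p a \<noteq> 0}. p a * q (gdiff c a) * \<tau> a (gdiff c a))"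

text \<open>Scalar lambda of F inside F*A (lambda times the identity tau(1,1)^-1 bar 1).\<close>
definition tga_scalar :: "(('i \<Rightarrow> int) \<Rightarrow> ('i \<Rightarrow> int) \<Rightarrow> 'f::field) \<Rightarrow> 'f \<Rightarrow> (('i \<Rightarrow> int) \<Rightarrow> 'f)" where
  "tga_scalar \<tau> l = (\<lambda>a. if a = gzero then l / \<tau> gzero gzero else 0)"

definition tga_one :: "(('i \<Rightarrow> int) \<Rightarrow> ('i \<Rightarrow> int) \<Rightarrow> 'f::field) \<Rightarrow> (('i \<Rightarrow> int) \<Rightarrow> 'f)" where
  "tga_one \<tau> = tga_scalar \<tau> 1"

definition tga_prod :: "(('i \<Rightarrow> int) \<Rightarrow> ('i \<Rightarrow> int) \<Rightarrow> 'f::field) \<Rightarrow>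
    (('i \<Rightarrow> int) \<Rightarrow> 'f) list \<Rightarrow> (('i \<Rightarrow> int) \<Rightarrow> 'f)" where
  "tga_prod \<tau> vs = foldr (tga_mult \<tau>) vs (tga_one \<tau>)"

text \<open>Right F*A-module structure on the type 'm (the whole type is M).\<close>
definition right_tga_module :: "(('i \<Rightarrow> int) \<Rightarrow> ('i \<Rightarrow> int) \<Rightarrow> 'f::field) \<Rightarrow>
    ('m::ab_group_add \<Rightarrow> (('i \<Rightarrow> int) \<Rightarrow> 'f) \<Rightarrow> 'm) \<Rightarrow> bool" where
  "right_tga_module \<tau> act \<longleftrightarrow>
     (\<forall>p\<in>tga_carrier UNIV. \<forall>q\<in>tga_carrier UNIV. \<forall>m. act m (tga_add p q) = act m p + act m q) \<and>
     (\<forall>p\<in>tga_carrier UNIV. \<forall>m m'. act (m + m') p = act m p + act m' p) \<and>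
     (\<forall>p\<in>tga_carrier UNIV. \<forall>q\<in>tga_carrier UNIV. \<forall>m. act m (tga_mult \<tau> p q) = act (act m p) q) \<and>
     (\<forall>m. act m (tga_one \<tau>) = m)"

definition fin_gen_module :: "('m::ab_group_add \<Rightarrow> (('i \<Rightarrow> int) \<Rightarrow> 'f::field) \<Rightarrow> 'm) \<Rightarrow> bool" where
  "fin_gen_module act \<longleftrightarrow> (\<exists>G. finite G \<and>
     (\<forall>m. \<exists>c. (\<forall>g\<in>G. c g \<in> tga_carrier UNIV) \<and> m = (\<Sum>g\<in>G. act g (c g))))"

definition tga_torsion :: "('m::ab_group_add \<Rightarrow> (('i \<Rightarrow> int) \<Rightarrow> 'f::field) \<Rightarrow> 'm) \<Rightarrow> ('i \<Rightarrow> int) set \<Rightarrow> bool" where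
  "tga_torsion act B \<longleftrightarrow> (\<forall>m. \<exists>s\<in>tga_carrier B. s \<noteq> tga_zero \<and> act m s = 0)"

definition Fspan :: "(('i \<Rightarrow> int) \<Rightarrow> ('i \<Rightarrow> int) \<Rightarrow> 'f::field) \<Rightarrow>
    ('m::ab_group_add \<Rightarrow> (('i \<Rightarrow> int) \<Rightarrow> 'f) \<Rightarrow> 'm) \<Rightarrow> 'm set \<Rightarrow> 'm set" where
  "Fspan \<tau> act S = {(\<Sum>w\<in>T. act w (tga_scalar \<tau> (c w))) | T c. finite T \<and> T \<subseteq> S}"

definition Fdim :: "(('i \<Rightarrow> int) \<Rightarrow> ('i \<Rightarrow> int) \<Rightarrow> 'f::field) \<Rightarrow>
    ('m::ab_group_add \<Rightarrow> (('i \<Rightarrow> int) \<Rightarrow> 'f) \<Rightarrow> 'm) \<Rightarrow> 'm set \<Rightarrow> nat" where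
  "Fdim \<tau> act S = (LEAST k. \<exists>T. finite T \<and> card T = k \<and> T \<subseteq> Fspan \<tau> act S \<and>
                       Fspan \<tau> act S \<subseteq> Fspan \<tau> act T)"

text \<open>W V^k, for W = span W0 and V = span V0: spanned by w v_1 ... v_k.\<close>
definition WVpow :: "(('i \<Rightarrow> int) \<Rightarrow> ('i \<Rightarrow> int) \<Rightarrow> 'f::field) \<Rightarrow>
    ('m::ab_group_add \<Rightarrow> (('i \<Rightarrow> int) \<Rightarrow> 'f) \<Rightarrow> 'm) \<Rightarrow> 'm set \<Rightarrow> (('i \<Rightarrow> int) \<Rightarrow> 'f) set \<Rightarrow> nat \<Rightarrow> 'm set" where
  "WVpow \<tau> act W0 V0 k = Fspan \<tau> act {act w (tga_prod \<tau> vs) | w vs. w \<in> W0 \<and> length vs = k \<and> set vs \<subseteq> V0}"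

text \<open>Gelfand-Kirillov dimension (over F): sup over finite-dimensional subspaces W of M and
  V of F*A of limsup_k log dim(W V^k) / log k.\<close>
definition gk :: "(('i \<Rightarrow> int) \<Rightarrow> ('i \<Rightarrow> int) \<Rightarrow> 'f::field) \<Rightarrow>
    ('m::ab_group_add \<Rightarrow> (('i \<Rightarrow> int) \<Rightarrow> 'f) \<Rightarrow> 'm) \<Rightarrow> ereal" where
  "gk \<tau> act = (SUP WV \<in> {(W0, V0). finite W0 \<and> finite V0 \<and> V0 \<subseteq> tga_carrier UNIV}.
      limsup (\<lambda>k. let d = Fdim \<tau> act (WVpow \<tau> act (fst WV) (snd WV) k) in
                   if d = 0 then - \<infinity> else ereal (ln (real d) / ln (real k))))"

definition tga_nonzero :: "('i \<Rightarrow> int) set \<Rightarrow> (('i \<Rightarrow> int) \<Rightarrow> 'f::field) set" where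
  "tga_nonzero B = tga_carrier B - {tga_zero}"

text \<open>(Q, phi) is the (right) Ore localization (F*A) S^-1: phi an injective ring hom,
  S mapped to units, every element of the form phi(a) phi(s)^-1.\<close>
definition right_quotient_ring :: "(('i \<Rightarrow> int) \<Rightarrow> ('i \<Rightarrow> int) \<Rightarrow> 'f::field) \<Rightarrow>
    (('i \<Rightarrow> int) \<Rightarrow> 'f) set \<Rightarrow> ((('i \<Rightarrow> int) \<Rightarrow> 'f) \<Rightarrow> 'q::ring_1) \<Rightarrow> bool" where
  "right_quotient_ring \<tau> S \<phi> \<longleftrightarrow>
     (\<forall>p\<in>tga_carrier UNIV. \<forall>q\<in>tga_carrier UNIV. \<phi> (tga_add p q) = \<phi> p + \<phi> q) \<and>
     (\<forall>p\<in>tga_carrier UNIV. \<forall>q\<in>tga_carrier UNIV. \<phi> (tga_mult \<tau> p q) = \<phi> p * \<phi> q) \<and>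
     \<phi> (tga_one \<tau>) = 1 \<and>
     inj_on \<phi> (tga_carrier UNIV) \<and>
     (\<forall>s\<in>S. \<exists>t. \<phi> s * t = 1 \<and> t * \<phi> s = 1) \<and>
     (\<forall>x. \<exists>a\<in>tga_carrier UNIV. \<exists>s\<in>S. \<exists>t. \<phi> s * t = 1 \<and> x = \<phi> a * t)"

text \<open>(N, actQ, iota) is the localized module M S^-1 = M \<otimes> (F*A)S^-1: a right Q-module with an
  F*A-linear map iota whose kernel is the S-torsion of M and such that every element
  is iota(m) phi(s)^-1.\<close>
definition module_of_fractions :: "(('i \<Rightarrow> int) \<Rightarrow> ('i \<Rightarrow> int) \<Rightarrow> 'f::field) \<Rightarrow>
    ('m::ab_group_add \<Rightarrow> (('i \<Rightarrow> int) \<Rightarrow> 'f) \<Rightarrow> 'm) \<Rightarrow> (('i \<Rightarrow> int) \<Rightarrow> 'f) set \<Rightarrow>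
    ((('i \<Rightarrow> int) \<Rightarrow> 'f) \<Rightarrow> 'q::ring_1) \<Rightarrow> ('v::ab_group_add \<Rightarrow> 'q \<Rightarrow> 'v) \<Rightarrow> ('m \<Rightarrow> 'v) \<Rightarrow> bool" where
  "module_of_fractions \<tau> act S \<phi> actQ \<iota> \<longleftrightarrow>
     (\<forall>v x y. actQ v (x + y) = actQ v x + actQ v y) \<and>
     (\<forall>v w x. actQ (v + w) x = actQ v x + actQ w x) \<and>
     (\<forall>v x y. actQ v (x * y) = actQ (actQ v x) y) \<and>
     (\<forall>v. actQ v 1 = v) \<and>
     (\<forall>m m'. \<iota> (m + m') = \<iota> m + \<iota> m') \<and>
     (\<forall>m. \<forall>a\<in>tga_carrier UNIV. \<iota> (act m a) = actQ (\<iota> m) (\<phi> a)) \<and>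
     (\<forall>v. \<exists>m. \<exists>s\<in>S. \<exists>t. \<phi> s * t = 1 \<and> v = actQ (\<iota> m) t) \<and>
     (\<forall>m. \<iota> m = 0 \<longleftrightarrow> (\<exists>s\<in>S. act m s = 0))"

text \<open>D: quotient division ring of F*B inside Q, i.e. {phi(b) phi(s)^-1}.\<close>
definition quot_div :: "('i \<Rightarrow> int) set \<Rightarrow> ((('i \<Rightarrow> int) \<Rightarrow> 'f::field) \<Rightarrow> 'q::ring_1) \<Rightarrow> 'q set" where
  "quot_div B \<phi> = {\<phi> b * t | b s t. b \<in> tga_carrier B \<and> s \<in> tga_nonzero B \<and> \<phi> s * t = 1}"

end

theory Submission
  imports Defs "HOL-Library.FuncSet"
begin


definition pt :: "('i \<Rightarrow> int) \<Rightarrow> 'f \<Rightarrow> ('i \<Rightarrow> int) \<Rightarrow> 'f::field" where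
  "pt a l = (\<lambda>y. if y = a then l else 0)"

lemma gdiff_eq_iff: "gdiff y a = c \<longleftrightarrow> a = gdiff y c"
  by (auto simp: gdiff_def fun_eq_iff algebra_simps)

lemma gdiff_gadd[simp]: "gdiff (gadd a b) a = b" "gdiff (gadd b a) a = b"
  by (auto simp: gdiff_def gadd_def fun_eq_iff)

lemma gadd_gdiff[simp]: "gadd a (gdiff c a) = c" "gadd (gdiff c a) a = c"
  by (auto simp: gdiff_def gadd_def fun_eq_iff)

lemma gdiff_gdiff[simp]: "gdiff y (gdiff y c) = c"
  by (auto simp: gdiff_def fun_eq_iff)

lemma gadd_comm: "gadd a b = gadd b a" by (auto simp: gadd_def fun_eq_iff)

lemma gzero_simps[simp]: "gadd gzero a = a" "gadd a gzero = a" "gdiff a gzero = a" "gdiff a a = gzero"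
  by (auto simp: gadd_def gdiff_def gzero_def fun_eq_iff)

lemma mult_pt_left:
  "tga_mult \<tau> (pt a l) q = (\<lambda>c. l * q (gdiff c a) * \<tau> a (gdiff c a))"
proof (cases "l = 0")
  case True
  then have "{x. pt a l x \<noteq> 0} = {}" by (auto simp: pt_def)
  then show ?thesis using True by (simp add: tga_mult_def fun_eq_iff)
next
  case False
  then have "{x. pt a l x \<noteq> 0} = {a}" by (auto simp: pt_def)
  then show ?thesis by (simp add: tga_mult_def fun_eq_iff pt_def)
qed

lemma mult_pt_right:
  assumes "finite {x. p x \<noteq> 0}"
  shows "tga_mult \<tau> p (pt c 1) = (\<lambda>y. p (gdiff y c) * \<tau> (gdiff y c) c)"
proof
  fix y
  have "tga_mult \<tau> p (pt c 1) y = (\<Sum>a\<in>{x. p x \<noteq> 0}. if a = gdiff y c then p a * \<tau> a (gdiff y a) else 0)"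
    unfolding tga_mult_def pt_def by (rule sum.cong) (auto simp: gdiff_eq_iff)
  also have "\<dots> = (if gdiff y c \<in> {x. p x \<noteq> 0} then p (gdiff y c) * \<tau> (gdiff y c) c else 0)"
    using assms by (simp add: sum.delta gdiff_eq_iff)
  also have "\<dots> = p (gdiff y c) * \<tau> (gdiff y c) c" by auto
  finally show "tga_mult \<tau> p (pt c 1) y = p (gdiff y c) * \<tau> (gdiff y c) c" .
qed

lemma cocycle_nz: "two_cocycle \<tau> \<Longrightarrow> \<tau> a b \<noteq> 0" by (simp add: two_cocycle_def)

lemma cocycle_0l: assumes "two_cocycle \<tau>" shows "\<tau> gzero c = \<tau> gzero gzero"
proof -
  have "\<tau> gzero gzero * \<tau> (gadd gzero gzero) c = \<tau> gzero c * \<tau> gzero (gadd gzero c)"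
    using assms unfolding two_cocycle_def by blast
  then have "\<tau> gzero gzero * \<tau> gzero c = \<tau> gzero c * \<tau> gzero c" by simp
  then show ?thesis using cocycle_nz[OF assms, of gzero c] by simp
qed

lemma cocycle_0r: assumes "two_cocycle \<tau>" shows "\<tau> c gzero = \<tau> gzero gzero"
proof -
  have "\<tau> c gzero * \<tau> (gadd c gzero) gzero = \<tau> gzero gzero * \<tau> c (gadd gzero gzero)"
    using assms unfolding two_cocycle_def by blast
  then have "\<tau> c gzero * \<tau> c gzero = \<tau> gzero gzero * \<tau> c gzero" by simp
  then show ?thesis using cocycle_nz[OF assms, of c gzero] by simp
qed

lemma scalar_pt: "tga_scalar \<tau> l = pt gzero (l / \<tau> gzero gzero)"
  by (simp add: tga_scalar_def pt_def fun_eq_iff)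

lemma one_pt: "tga_one \<tau> = pt gzero (1 / \<tau> gzero gzero)"
  by (simp add: tga_one_def scalar_pt)

lemma mult_pt_scalar:
  assumes "two_cocycle \<tau>"
  shows "tga_mult \<tau> (pt a l) (tga_scalar \<tau> u) = pt a (l * u)"
proof
  fix c
  show "tga_mult \<tau> (pt a l) (tga_scalar \<tau> u) c = pt a (l * u) c"
    unfolding mult_pt_left scalar_pt
    using cocycle_0r[OF assms, of a] cocycle_nz[OF assms]
    by (cases "c = a") (auto simp: pt_def gdiff_eq_iff)
qed

lemma mult_scalar_left:
  assumes "two_cocycle \<tau>"
  shows "tga_mult \<tau> (tga_scalar \<tau> u) q = (\<lambda>c. u * q c)"
proof
  fix c
  show "tga_mult \<tau> (tga_scalar \<tau> u) q c = u * q c"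
    unfolding mult_pt_left scalar_pt
    using cocycle_0l[OF assms, of c] cocycle_nz[OF assms, of gzero gzero]
    by simp
qed

lemma mult_pt_pt:
  "tga_mult \<tau> (pt a l) (pt b m) = pt (gadd a b) (l * m * \<tau> a b)"
proof
  fix c
  show "tga_mult \<tau> (pt a l) (pt b m) c = pt (gadd a b) (l * m * \<tau> a b) c"
    unfolding mult_pt_left
    by (cases "c = gadd a b") (auto simp: pt_def gdiff_eq_iff)
qed

lemma carrier_pt: "a \<in> B \<Longrightarrow> pt a l \<in> tga_carrier B"
proof -
  assume "a \<in> B"
  have "{x. pt a l x \<noteq> 0} \<subseteq> {a}" by (auto simp: pt_def)
  then show ?thesis using \<open>a \<in> B\<close> by (auto simp: tga_carrier_def intro: finite_subset)
qed

lemma supp_mult: "tga_mult \<tau> p q c \<noteq> 0 \<Longrightarrow> \<exists>a b. p a \<noteq> 0 \<and> q b \<noteq> 0 \<and> c = gadd a b"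
proof -
  assume "tga_mult \<tau> p q c \<noteq> 0"
  then obtain a where "p a \<noteq> 0" "p a * q (gdiff c a) * \<tau> a (gdiff c a) \<noteq> 0"
    unfolding tga_mult_def by (metis (mono_tags, lifting) mem_Collect_eq sum.neutral)
  then show ?thesis by (intro exI[of _ a] exI[of _ "gdiff c a"]) auto
qed

lemma carrier_mult:
  assumes "p \<in> tga_carrier B" "q \<in> tga_carrier B" "\<And>a b. a \<in> B \<Longrightarrow> b \<in> B \<Longrightarrow> gadd a b \<in> B"
  shows "tga_mult \<tau> p q \<in> tga_carrier B"
proof -
  have sub: "{c. tga_mult \<tau> p q c \<noteq> 0} \<subseteq> (\<lambda>(a,b). gadd a b) ` ({a. p a \<noteq> 0} \<times> {b. q b \<noteq> 0})"
    using supp_mult by fastforce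
  have "finite ((\<lambda>(a,b). gadd a b) ` ({a. p a \<noteq> 0} \<times> {b. q b \<noteq> 0}))"
    using assms(1,2) by (auto simp: tga_carrier_def)
  moreover have "(\<lambda>(a,b). gadd a b) ` ({a. p a \<noteq> 0} \<times> {b. q b \<noteq> 0}) \<subseteq> B"
    using assms by (auto simp: tga_carrier_def)
  ultimately show ?thesis using sub unfolding tga_carrier_def by (auto intro: finite_subset)
qed

lemma carrier_add:
  assumes "p \<in> tga_carrier B" "q \<in> tga_carrier B"
  shows "tga_add p q \<in> tga_carrier B"
proof -
  have "{c. tga_add p q c \<noteq> 0} \<subseteq> {a. p a \<noteq> 0} \<union> {b. q b \<noteq> 0}" by (auto simp: tga_add_def)
  then show ?thesis using assms unfolding tga_carrier_def by (auto intro: finite_subset)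
qed

lemma carrier_mono: "p \<in> tga_carrier B \<Longrightarrow> B \<subseteq> C \<Longrightarrow> p \<in> tga_carrier C"
  by (auto simp: tga_carrier_def)

lemma carrier_zero[simp]: "tga_zero \<in> tga_carrier B"
  by (auto simp: tga_carrier_def tga_zero_def)

lemma subgrp_gadd: "a \<in> subgrp K \<Longrightarrow> b \<in> subgrp K \<Longrightarrow> gadd a b \<in> subgrp K"
  by (auto simp: subgrp_def gadd_def)
lemma subgrp_gzero[simp]: "gzero \<in> subgrp K"
  by (auto simp: subgrp_def gzero_def)
lemma subgrp_mono: "K \<subseteq> L \<Longrightarrow> subgrp K \<subseteq> subgrp L"
  by (auto simp: subgrp_def)
lemma subgrp_UNIV: "subgrp UNIV = UNIV" by (auto simp: subgrp_def)

lemma carrier_mult_subgrp: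
  "p \<in> tga_carrier (subgrp K) \<Longrightarrow> q \<in> tga_carrier (subgrp K) \<Longrightarrow> tga_mult \<tau> p q \<in> tga_carrier (subgrp K)"
  by (rule carrier_mult) (auto intro: subgrp_gadd)

lemma mult_add_right:
  "tga_mult \<tau> p (tga_add q1 q2) = tga_add (tga_mult \<tau> p q1) (tga_mult \<tau> p q2)"
  by (simp add: tga_mult_def tga_add_def fun_eq_iff sum.distrib algebra_simps)

lemma one_nz: "two_cocycle \<tau> \<Longrightarrow> tga_one \<tau> \<noteq> tga_zero"
proof
  assume "two_cocycle \<tau>" "tga_one \<tau> = tga_zero"
  then have "tga_one \<tau> gzero = 0" by (simp add: tga_zero_def)
  then show False using cocycle_nz[OF \<open>two_cocycle \<tau>\<close>, of gzero gzero]
    by (simp add: one_pt pt_def tga_zero_def)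
qed




definition tsum :: "'k set \<Rightarrow> ('k \<Rightarrow> ('i \<Rightarrow> int) \<Rightarrow> 'f::field) \<Rightarrow> ('i \<Rightarrow> int) \<Rightarrow> 'f" where
  "tsum K f = (\<lambda>y. \<Sum>k\<in>K. f k y)"

lemma tsum_insert: "finite K \<Longrightarrow> k \<notin> K \<Longrightarrow> tsum (insert k K) f = tga_add (f k) (tsum K f)"
  by (simp add: tsum_def tga_add_def)
lemma tsum_empty[simp]: "tsum {} f = tga_zero"
  by (simp add: tsum_def tga_zero_def)

lemma carrier_tsum: "finite K \<Longrightarrow> (\<And>k. k \<in> K \<Longrightarrow> f k \<in> tga_carrier B) \<Longrightarrow> tsum K f \<in> tga_carrier B"
  by (induction K rule: finite_induct) (auto simp: tsum_insert intro: carrier_add)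

lemma unit_right_inv: "(x::'q::ring_1) * t0 = 1 \<Longrightarrow> t0 * x = 1 \<Longrightarrow> x * t = 1 \<Longrightarrow> t * x = 1"
  by (metis mult.assoc mult_1_left mult_1_right)

locale L =
  fixes \<tau> :: "('i \<Rightarrow> int) \<Rightarrow> ('i \<Rightarrow> int) \<Rightarrow> 'f::field"
    and act :: "'m::ab_group_add \<Rightarrow> (('i \<Rightarrow> int) \<Rightarrow> 'f) \<Rightarrow> 'm"
    and I :: "'i set"
    and \<phi> :: "(('i \<Rightarrow> int) \<Rightarrow> 'f) \<Rightarrow> 'q::ring_1"
    and actQ :: "'v::ab_group_add \<Rightarrow> 'q \<Rightarrow> 'v"
    and \<iota> :: "'m \<Rightarrow> 'v"
  assumes coc: "two_cocycle \<tau>"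
    and md: "right_tga_module \<tau> act"
    and rq: "right_quotient_ring \<tau> (tga_nonzero (subgrp I)) \<phi>"
    and mf: "module_of_fractions \<tau> act (tga_nonzero (subgrp I)) \<phi> actQ \<iota>"
begin

abbreviation "C \<equiv> tga_carrier UNIV"
abbreviation "S \<equiv> tga_nonzero (subgrp I)"
abbreviation "D \<equiv> quot_div (subgrp I) \<phi>"

lemma act_add_r: "p \<in> C \<Longrightarrow> q \<in> C \<Longrightarrow> act m (tga_add p q) = act m p + act m q"
  using md by (simp add: right_tga_module_def)
lemma act_add_l: "p \<in> C \<Longrightarrow> act (m + m') p = act m p + act m' p"
  using md by (simp add: right_tga_module_def)
lemma act_mult: "p \<in> C \<Longrightarrow> q \<in> C \<Longrightarrow> act m (tga_mult \<tau> p q) = act (act m p) q"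
  using md by (simp add: right_tga_module_def)
lemma act_one: "act m (tga_one \<tau>) = m"
  using md by (simp add: right_tga_module_def)
lemma act_zero_r[simp]: "act m tga_zero = 0"
proof -
  have "tga_add tga_zero tga_zero = (tga_zero :: ('i \<Rightarrow> int) \<Rightarrow> 'f)" by (simp add: tga_add_def tga_zero_def)
  then have "act m tga_zero = act m tga_zero + act m tga_zero" using act_add_r[of tga_zero tga_zero m] by simp
  then show ?thesis by simp
qed
lemma act_zero_l[simp]: "p \<in> C \<Longrightarrow> act 0 p = 0"
  using act_add_l[of p 0 0] by simp

lemma act_sum_l: "p \<in> C \<Longrightarrow> act (\<Sum>g\<in>G. f g) p = (\<Sum>g\<in>G. act (f g) p)"
  by (induction G rule: infinite_finite_induct) (auto simp: act_add_l)

lemma act_tsum: "finite K \<Longrightarrow> (\<And>k. k \<in> K \<Longrightarrow> f k \<in> C) \<Longrightarrow> act m (tsum K f) = (\<Sum>k\<in>K. act m (f k))"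
  by (induction K rule: finite_induct) (auto simp: tsum_insert act_add_r carrier_tsum)

lemma phi_add: "p \<in> C \<Longrightarrow> q \<in> C \<Longrightarrow> \<phi> (tga_add p q) = \<phi> p + \<phi> q"
  using rq by (simp add: right_quotient_ring_def)
lemma phi_mult: "p \<in> C \<Longrightarrow> q \<in> C \<Longrightarrow> \<phi> (tga_mult \<tau> p q) = \<phi> p * \<phi> q"
  using rq by (simp add: right_quotient_ring_def)
lemma phi_one: "\<phi> (tga_one \<tau>) = 1"
  using rq by (simp add: right_quotient_ring_def)
lemma phi_inj: "p \<in> C \<Longrightarrow> q \<in> C \<Longrightarrow> \<phi> p = \<phi> q \<Longrightarrow> p = q"
  using rq by (simp add: right_quotient_ring_def inj_on_def)
lemma phi_unit: "s \<in> S \<Longrightarrow> \<exists>t. \<phi> s * t = 1 \<and> t * \<phi> s = 1"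
  using rq by (simp add: right_quotient_ring_def)
lemma phi_frac: "\<exists>a\<in>C. \<exists>s\<in>S. \<exists>t. \<phi> s * t = 1 \<and> x = \<phi> a * t"
  using rq by (simp add: right_quotient_ring_def)
lemma phi_zero[simp]: "\<phi> tga_zero = 0"
proof -
  have "tga_add tga_zero tga_zero = (tga_zero :: ('i \<Rightarrow> int) \<Rightarrow> 'f)" by (simp add: tga_add_def tga_zero_def)
  then have "\<phi> tga_zero = \<phi> tga_zero + \<phi> tga_zero" using phi_add[of tga_zero tga_zero] by simp
  then show ?thesis by simp
qed
lemma phi_tsum: "finite K \<Longrightarrow> (\<And>k. k \<in> K \<Longrightarrow> f k \<in> C) \<Longrightarrow> \<phi> (tsum K f) = (\<Sum>k\<in>K. \<phi> (f k))"
  by (induction K rule: finite_induct) (auto simp: tsum_insert phi_add carrier_tsum)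

lemma inv_both: "s \<in> S \<Longrightarrow> \<phi> s * t = 1 \<Longrightarrow> t * \<phi> s = 1"
  using phi_unit unit_right_inv by blast

lemma S_carrier: "s \<in> S \<Longrightarrow> s \<in> tga_carrier (subgrp I)"
  by (simp add: tga_nonzero_def)
lemma S_C: "s \<in> S \<Longrightarrow> s \<in> C"
  by (auto simp: tga_nonzero_def tga_carrier_def)

lemma zero_neq_one_q: "(0::'q) \<noteq> 1"
proof
  assume "(0::'q) = 1"
  then have "\<phi> tga_zero = \<phi> (tga_one \<tau>)" by (simp add: phi_one)
  moreover have "tga_one \<tau> \<in> C" by (simp add: one_pt carrier_pt)
  ultimately have "tga_zero = tga_one \<tau>" using phi_inj by simp
  then show False using one_nz[OF coc] by simp
qed

lemma one_S: "tga_one \<tau> \<in> S"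
  using one_nz[OF coc] by (simp add: tga_nonzero_def one_pt carrier_pt)

lemma mult_S: "s \<in> S \<Longrightarrow> s' \<in> S \<Longrightarrow> tga_mult \<tau> s s' \<in> S"
proof -
  assume a: "s \<in> S" "s' \<in> S"
  then obtain t t' where "\<phi> s * t = 1" "\<phi> s' * t' = 1" using phi_unit by blast
  then have "\<phi> (tga_mult \<tau> s s') * (t' * t) = 1"
    using a by (simp add: phi_mult S_C mult.assoc) (metis mult.assoc mult_1_left)
  then have "tga_mult \<tau> s s' \<noteq> tga_zero" using zero_neq_one_q by auto
  then show ?thesis using a by (simp add: tga_nonzero_def carrier_mult_subgrp)
qed

lemma cI_C: "b \<in> tga_carrier K \<Longrightarrow> b \<in> C" by (auto simp: tga_carrier_def)

lemma ore:
  assumes s: "s \<in> S" and t: "\<phi> s * t = 1" and IK: "I \<subseteq> K" and a: "a \<in> tga_carrier (subgrp K)"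
  shows "\<exists>a'\<in>tga_carrier (subgrp K). \<exists>s'\<in>S. \<exists>t'. \<phi> s' * t' = 1 \<and> t * \<phi> a = \<phi> a' * t'"
proof -
  obtain a'' s' t' where a'': "a'' \<in> C" and s': "s' \<in> S" and t': "\<phi> s' * t' = 1"
    and eq: "t * \<phi> a = \<phi> a'' * t'" using phi_frac[of "t * \<phi> a"] by blast
  have ts: "t * \<phi> s = 1" using inv_both[OF s t] .
  have t's: "t' * \<phi> s' = 1" using inv_both[OF s' t'] .
  have "\<phi> a = \<phi> s * (t * \<phi> a)" using t by (simp add: mult.assoc[symmetric])
  also have "\<dots> = \<phi> s * \<phi> a'' * t'" using eq by (simp add: mult.assoc)
  finally have "\<phi> a * \<phi> s' = \<phi> s * \<phi> a''" using t's by (simp add: mult.assoc)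
  then have "\<phi> (tga_mult \<tau> a s') = \<phi> (tga_mult \<tau> s a'')"
    using a a'' s s' by (simp add: phi_mult S_C cI_C)
  moreover have m1: "tga_mult \<tau> a s' \<in> C" using carrier_mult[of a UNIV s' \<tau>] cI_C[OF a] S_C[OF s'] by simp
  moreover have m2: "tga_mult \<tau> s a'' \<in> C" using carrier_mult[of s UNIV a'' \<tau>] a'' S_C[OF s] by simp
  ultimately have E: "tga_mult \<tau> a s' = tga_mult \<tau> s a''" using phi_inj by blast
  define a1 where "a1 = (\<lambda>c. if c \<in> subgrp K then a'' c else 0)"
  define a2 where "a2 = (\<lambda>c. if c \<in> subgrp K then 0 else a'' c)"
  have a12: "a'' = tga_add a1 a2" by (simp add: a1_def a2_def tga_add_def fun_eq_iff)
  have fa: "finite {c. a'' c \<noteq> 0}" using a'' by (simp add: tga_carrier_def)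
  have "{c. a1 c \<noteq> 0} \<subseteq> {c. a'' c \<noteq> 0}" "{c. a1 c \<noteq> 0} \<subseteq> subgrp K" by (auto simp: a1_def split: if_splits)
  then have a1C: "a1 \<in> tga_carrier (subgrp K)" using fa finite_subset unfolding tga_carrier_def by blast
  have "{c. a2 c \<noteq> 0} \<subseteq> {c. a'' c \<noteq> 0}" by (auto simp: a2_def split: if_splits)
  then have a2C: "a2 \<in> C" using fa finite_subset unfolding tga_carrier_def by blast
  have sK: "s \<in> tga_carrier (subgrp K)"
    using S_carrier[OF s] subgrp_mono[OF IK] carrier_mono by blast
  have s'K: "s' \<in> tga_carrier (subgrp K)"
    using S_carrier[OF s'] subgrp_mono[OF IK] carrier_mono by blast
  have "tga_mult \<tau> s a2 = tga_zero"
  proof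
    fix c
    show "tga_mult \<tau> s a2 c = tga_zero c"
    proof (cases "c \<in> subgrp K")
      case True
      show ?thesis
      proof (rule ccontr)
        assume "tga_mult \<tau> s a2 c \<noteq> tga_zero c"
        then obtain x y where "s x \<noteq> 0" "a2 y \<noteq> 0" "c = gadd x y"
          using supp_mult[of \<tau> s a2 c] by (auto simp: tga_zero_def)
        moreover have "x \<in> subgrp K" using \<open>s x \<noteq> 0\<close> sK by (auto simp: tga_carrier_def)
        moreover have "y \<notin> subgrp K" using \<open>a2 y \<noteq> 0\<close> by (auto simp: a2_def)
        ultimately have "gdiff c x \<in> subgrp K" using True by (auto simp: subgrp_def gdiff_def)
        moreover have "gdiff c x = y" using \<open>c = gadd x y\<close> by simp
        ultimately show False using \<open>y \<notin> subgrp K\<close> by simp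
      qed
    next
      case False
      have z1: "tga_mult \<tau> a s' c = 0"
      proof (rule ccontr)
        assume "tga_mult \<tau> a s' c \<noteq> 0"
        then obtain x y where "a x \<noteq> 0" "s' y \<noteq> 0" "c = gadd x y" using supp_mult by blast
        moreover have "x \<in> subgrp K" using a \<open>a x \<noteq> 0\<close> by (auto simp: tga_carrier_def)
        moreover have "y \<in> subgrp K" using s'K \<open>s' y \<noteq> 0\<close> by (auto simp: tga_carrier_def)
        ultimately show False using False subgrp_gadd by blast
      qed
      have z2: "tga_mult \<tau> s a1 c = 0"
      proof (rule ccontr)
        assume "tga_mult \<tau> s a1 c \<noteq> 0"
        then obtain x y where "s x \<noteq> 0" "a1 y \<noteq> 0" "c = gadd x y" using supp_mult by blast
        moreover have "x \<in> subgrp K" using sK \<open>s x \<noteq> 0\<close> by (auto simp: tga_carrier_def)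
        moreover have "y \<in> subgrp K" using a1C \<open>a1 y \<noteq> 0\<close> by (auto simp: tga_carrier_def)
        ultimately show False using False subgrp_gadd by blast
      qed
      have "tga_mult \<tau> s a'' c = tga_add (tga_mult \<tau> s a1) (tga_mult \<tau> s a2) c"
        by (subst a12) (simp only: mult_add_right)
      then have "tga_mult \<tau> s a'' c = tga_mult \<tau> s a1 c + tga_mult \<tau> s a2 c"
        by (simp add: tga_add_def)
      then show ?thesis using E z1 z2 by (simp add: tga_zero_def)
    qed
  qed
  then have "\<phi> s * \<phi> a2 = 0" using s a2C by (simp add: phi_mult[symmetric] S_C)
  then have "t * (\<phi> s * \<phi> a2) = 0" by simp
  then have "\<phi> a2 = 0" using ts by (simp add: mult.assoc[symmetric])
  then have "a2 = tga_zero" using phi_inj[of a2 tga_zero] a2C by simp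
  then have "a'' = a1" using a12 by (simp add: tga_add_def tga_zero_def)
  then have a''K: "a'' \<in> tga_carrier (subgrp K)" using a1C by simp
  show ?thesis using a''K s' t' eq by (intro bexI[of _ a''] bexI[of _ s'] exI[of _ t']) auto
qed

lemma D_intro: "b \<in> tga_carrier (subgrp I) \<Longrightarrow> s \<in> S \<Longrightarrow> \<phi> s * t = 1 \<Longrightarrow> \<phi> b * t \<in> D"
  by (auto simp: quot_div_def)

lemma D_phi: "b \<in> tga_carrier (subgrp I) \<Longrightarrow> \<phi> b \<in> D"
  using D_intro[of b "tga_one \<tau>" 1] one_S by (simp add: phi_one)

lemma D_inv: "s \<in> S \<Longrightarrow> \<phi> s * t = 1 \<Longrightarrow> t \<in> D"
  using D_intro[of "tga_one \<tau>" s t] one_S by (simp add: phi_one S_carrier)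

lemma D_one: "1 \<in> D"
proof -
  have "tga_one \<tau> \<in> tga_carrier (subgrp I)" using one_S S_carrier by blast
  then show ?thesis using D_phi phi_one by metis
qed
lemma D_zero: "0 \<in> D" using D_phi[of tga_zero] by simp

lemma D_mult: assumes "x \<in> D" "y \<in> D" shows "x * y \<in> D"
proof -
  obtain b1 s1 t1 where 1: "x = \<phi> b1 * t1" "b1 \<in> tga_carrier (subgrp I)" "s1 \<in> S" "\<phi> s1 * t1 = 1"
    using assms(1) by (auto simp: quot_div_def tga_nonzero_def)
  obtain b2 s2 t2 where 2: "y = \<phi> b2 * t2" "b2 \<in> tga_carrier (subgrp I)" "s2 \<in> S" "\<phi> s2 * t2 = 1"
    using assms(2) by (auto simp: quot_div_def tga_nonzero_def)
  obtain b3 s3 t3 where 3: "b3 \<in> tga_carrier (subgrp I)" "s3 \<in> S" "\<phi> s3 * t3 = 1" "t1 * \<phi> b2 = \<phi> b3 * t3"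
    using ore[OF 1(3,4) _ 2(2)] by blast
  have "x * y = \<phi> b1 * (t1 * \<phi> b2) * t2" using 1 2 by (simp add: mult.assoc)
  also have "\<dots> = \<phi> b1 * \<phi> b3 * (t3 * t2)" using 3(4) by (simp add: mult.assoc)
  finally have xy: "x * y = \<phi> (tga_mult \<tau> b1 b3) * (t3 * t2)"
    using 1 3 by (simp add: phi_mult cI_C)
  have "\<phi> s2 * (\<phi> s3 * t3) * t2 = 1" using 2(4) 3(3) by (metis mult_1_right)
  then have "\<phi> s2 * \<phi> s3 * (t3 * t2) = 1" by (simp only: mult.assoc)
  then have inv: "\<phi> (tga_mult \<tau> s2 s3) * (t3 * t2) = 1"
    using phi_mult[OF S_C[OF 2(3)] S_C[OF 3(2)]] by simp
  show ?thesis unfolding xy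
    by (rule D_intro[OF carrier_mult_subgrp[OF 1(2) 3(1)] mult_S[OF 2(3) 3(2)] inv])
qed

lemma D_add: assumes "x \<in> D" "y \<in> D" shows "x + y \<in> D"
proof -
  obtain b1 s1 t1 where 1: "x = \<phi> b1 * t1" "b1 \<in> tga_carrier (subgrp I)" "s1 \<in> S" "\<phi> s1 * t1 = 1"
    using assms(1) by (auto simp: quot_div_def tga_nonzero_def)
  obtain b2 s2 t2 where 2: "y = \<phi> b2 * t2" "b2 \<in> tga_carrier (subgrp I)" "s2 \<in> S" "\<phi> s2 * t2 = 1"
    using assms(2) by (auto simp: quot_div_def tga_nonzero_def)
  obtain b3 s3 t3 where 3: "b3 \<in> tga_carrier (subgrp I)" "s3 \<in> S" "\<phi> s3 * t3 = 1" "t1 * \<phi> s2 = \<phi> b3 * t3"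
    using ore[OF 1(3,4) _ S_carrier[OF 2(3)]] by blast
  have t2s2: "\<phi> s2 * t2 = 1" using 2 by simp
  have "t1 = t1 * \<phi> s2 * t2" using t2s2 by (simp add: mult.assoc)
  also have "\<dots> = \<phi> b3 * (t3 * t2)" using 3 by (simp add: mult.assoc)
  finally have t1e: "t1 = \<phi> b3 * (t3 * t2)" .
  have "y = \<phi> b2 * (\<phi> s3 * t3) * t2" using 2(1) 3(3) by simp
  then have "y = \<phi> b2 * \<phi> s3 * (t3 * t2)" by (simp add: mult.assoc)
  then have ye: "y = \<phi> (tga_mult \<tau> b2 s3) * (t3 * t2)"
    using 2 3 by (simp add: phi_mult cI_C S_C)
  have xe: "x = \<phi> (tga_mult \<tau> b1 b3) * (t3 * t2)"
    using 1 3 t1e by (simp add: phi_mult cI_C mult.assoc)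
  have p1: "tga_mult \<tau> b1 b3 \<in> tga_carrier (subgrp I)" using 1 3 carrier_mult_subgrp by blast
  have p2: "tga_mult \<tau> b2 s3 \<in> tga_carrier (subgrp I)" using 2 3 carrier_mult_subgrp S_carrier by blast
  have "x + y = (\<phi> (tga_mult \<tau> b1 b3) + \<phi> (tga_mult \<tau> b2 s3)) * (t3 * t2)"
    using xe ye by (simp add: distrib_right)
  also have "\<dots> = \<phi> (tga_add (tga_mult \<tau> b1 b3) (tga_mult \<tau> b2 s3)) * (t3 * t2)"
    using phi_add[OF cI_C[OF p1] cI_C[OF p2]] by simp
  finally have xy: "x + y = \<phi> (tga_add (tga_mult \<tau> b1 b3) (tga_mult \<tau> b2 s3)) * (t3 * t2)" .
  have "\<phi> s2 * (\<phi> s3 * t3) * t2 = 1" using 2(4) 3(3) by (metis mult_1_right)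
  then have "\<phi> s2 * \<phi> s3 * (t3 * t2) = 1" by (simp only: mult.assoc)
  then have inv: "\<phi> (tga_mult \<tau> s2 s3) * (t3 * t2) = 1"
    using phi_mult[OF S_C[OF 2(3)] S_C[OF 3(2)]] by simp
  show ?thesis unfolding xy
    by (rule D_intro[OF carrier_add[OF p1 p2] mult_S[OF 2(3) 3(2)] inv])
qed

lemma D_uminus: assumes "x \<in> D" shows "- x \<in> D"
proof -
  obtain b1 s1 t1 where 1: "x = \<phi> b1 * t1" "b1 \<in> tga_carrier (subgrp I)" "s1 \<in> S" "\<phi> s1 * t1 = 1"
    using assms(1) by (auto simp: quot_div_def tga_nonzero_def)
  define nb where "nb = (\<lambda>c. - b1 c)"
  have nbC: "nb \<in> tga_carrier (subgrp I)" using 1(2) by (simp add: nb_def tga_carrier_def)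
  have "tga_add b1 nb = tga_zero" by (simp add: nb_def tga_add_def tga_zero_def)
  then have "\<phi> b1 + \<phi> nb = 0" using phi_add[OF cI_C[OF 1(2)] cI_C[OF nbC]] by simp
  then have "\<phi> nb = - \<phi> b1" by (simp add: add_eq_0_iff)
  then have "- x = \<phi> nb * t1" using 1(1) by simp
  then show ?thesis using D_intro[OF nbC 1(3,4)] by simp
qed

end



definition ejk :: "'i \<Rightarrow> int \<Rightarrow> 'i \<Rightarrow> int" where
  "ejk j k = (\<lambda>i. if i = j then k else 0)"

lemma gadd_ejk: "gadd (ejk j k) (ejk j l) = ejk j (k + l)"
  by (auto simp: gadd_def ejk_def fun_eq_iff)

lemma ejk_subgrp: "ejk j k \<in> subgrp (insert j K)"
  by (auto simp: ejk_def subgrp_def)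

lemma conj_lemma:
  assumes "p \<in> tga_carrier B" and c0: "two_cocycle \<tau>"
  shows "tga_mult \<tau> p (pt c 1) = tga_mult \<tau> (pt c 1) (\<lambda>z. p z * \<tau> z c / \<tau> c z)"
    and "two_cocycle \<tau> \<Longrightarrow> (\<lambda>z. p z * \<tau> z c / \<tau> c z) \<in> tga_carrier B"
    and "two_cocycle \<tau> \<Longrightarrow> p \<noteq> tga_zero \<Longrightarrow> (\<lambda>z. p z * \<tau> z c / \<tau> c z) \<noteq> tga_zero"
proof -
  have f: "finite {x. p x \<noteq> 0}" using assms by (simp add: tga_carrier_def)
  show "tga_mult \<tau> p (pt c 1) = tga_mult \<tau> (pt c 1) (\<lambda>z. p z * \<tau> z c / \<tau> c z)"
  proof
    fix y
    show "tga_mult \<tau> p (pt c 1) y = tga_mult \<tau> (pt c 1) (\<lambda>z. p z * \<tau> z c / \<tau> c z) y"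
      unfolding mult_pt_right[OF f] mult_pt_left
      using cocycle_nz[OF c0, of c "gdiff y c"] by simp
  qed
next
  assume c: "two_cocycle \<tau>"
  have "{z. p z * \<tau> z c / \<tau> c z \<noteq> 0} = {z. p z \<noteq> 0}" using cocycle_nz[OF c] by auto
  then show "(\<lambda>z. p z * \<tau> z c / \<tau> c z) \<in> tga_carrier B" using assms by (simp add: tga_carrier_def)
next
  assume c: "two_cocycle \<tau>" and "p \<noteq> tga_zero"
  then obtain z where "p z \<noteq> 0" by (auto simp: tga_zero_def)
  then show "(\<lambda>z. p z * \<tau> z c / \<tau> c z) \<noteq> tga_zero" using cocycle_nz[OF c]
    by (auto simp: tga_zero_def fun_eq_iff intro!: exI[of _ z])
qed

definition dpart :: "(('i \<Rightarrow> int) \<Rightarrow> ('i \<Rightarrow> int) \<Rightarrow> 'f::field) \<Rightarrow> 'i \<Rightarrow> (('i \<Rightarrow> int) \<Rightarrow> 'f) \<Rightarrow> int \<Rightarrow> ('i \<Rightarrow> int) \<Rightarrow> 'f" where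
  "dpart \<tau> j p k = (\<lambda>z. if z j = 0 then p (gadd z (ejk j k)) / \<tau> (ejk j k) z else 0)"

definition dind :: "'i \<Rightarrow> (('i \<Rightarrow> int) \<Rightarrow> 'f::field) \<Rightarrow> int set" where
  "dind j p = (\<lambda>y. y j) ` {y. p y \<noteq> 0}"

lemma decomp:
  assumes c: "two_cocycle \<tau>" and p: "p \<in> tga_carrier (subgrp (insert j K))" and j: "j \<notin> K"
  shows "finite (dind j p)"
    and "\<And>k. dpart \<tau> j p k \<in> tga_carrier (subgrp K)"
    and "p = tsum (dind j p) (\<lambda>k. tga_mult \<tau> (pt (ejk j k) 1) (dpart \<tau> j p k))"
    and "\<And>k. k \<in> dind j p \<Longrightarrow> dpart \<tau> j p k \<noteq> tga_zero"
    and "p \<noteq> tga_zero \<Longrightarrow> dind j p \<noteq> {}"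
proof -
  have f: "finite {y. p y \<noteq> 0}" and sub: "{y. p y \<noteq> 0} \<subseteq> subgrp (insert j K)"
    using p by (auto simp: tga_carrier_def)
  show "finite (dind j p)" using f by (simp add: dind_def)
  show "dpart \<tau> j p k \<in> tga_carrier (subgrp K)" for k
  proof -
    have "{z. dpart \<tau> j p k z \<noteq> 0} \<subseteq> (\<lambda>y. gdiff y (ejk j k)) ` {y. p y \<noteq> 0}"
    proof
      fix z assume "z \<in> {z. dpart \<tau> j p k z \<noteq> 0}"
      then have "p (gadd z (ejk j k)) \<noteq> 0" by (auto simp: dpart_def split: if_splits)
      moreover have "z = gdiff (gadd z (ejk j k)) (ejk j k)" by simp
      ultimately show "z \<in> (\<lambda>y. gdiff y (ejk j k)) ` {y. p y \<noteq> 0}" by blast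
    qed
    moreover have "{z. dpart \<tau> j p k z \<noteq> 0} \<subseteq> subgrp K"
    proof
      fix z assume "z \<in> {z. dpart \<tau> j p k z \<noteq> 0}"
      then have zj: "z j = 0" and "p (gadd z (ejk j k)) \<noteq> 0" by (auto simp: dpart_def split: if_splits)
      then have "gadd z (ejk j k) \<in> subgrp (insert j K)" using sub by blast
      then show "z \<in> subgrp K" using zj by (auto simp: subgrp_def gadd_def ejk_def split: if_splits)
    qed
    ultimately show ?thesis using f unfolding tga_carrier_def by (auto intro: finite_subset)
  qed
  show "p = tsum (dind j p) (\<lambda>k. tga_mult \<tau> (pt (ejk j k) 1) (dpart \<tau> j p k))"
  proof
    fix y
    have "\<And>k. tga_mult \<tau> (pt (ejk j k) 1) (dpart \<tau> j p k) y = (if y j = k then p y else 0)"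
    proof -
      fix k
      have e1: "(gdiff y (ejk j k)) j = 0 \<longleftrightarrow> y j = k" by (simp add: gdiff_def ejk_def)
      show "tga_mult \<tau> (pt (ejk j k) 1) (dpart \<tau> j p k) y = (if y j = k then p y else 0)"
        unfolding mult_pt_left dpart_def using e1 cocycle_nz[OF c] by simp
    qed
    then have "tsum (dind j p) (\<lambda>k. tga_mult \<tau> (pt (ejk j k) 1) (dpart \<tau> j p k)) y
        = (\<Sum>k\<in>dind j p. if y j = k then p y else 0)" by (simp add: tsum_def)
    also have "\<dots> = (if y j \<in> dind j p then p y else 0)"
      using \<open>finite (dind j p)\<close> by (simp add: sum.delta)
    also have "\<dots> = p y" by (auto simp: dind_def)
    finally show "p y = tsum (dind j p) (\<lambda>k. tga_mult \<tau> (pt (ejk j k) 1) (dpart \<tau> j p k)) y" by simp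
  qed
  show "dpart \<tau> j p k \<noteq> tga_zero" if kin: "k \<in> dind j p" for k
  proof -
    obtain y where y: "p y \<noteq> 0" "y j = k" using kin unfolding dind_def by blast
    define z where "z = gdiff y (ejk j k)"
    have zj: "z j = 0" using y by (auto simp: z_def gdiff_def ejk_def)
    have zy: "gadd z (ejk j k) = y" by (simp add: z_def)
    have "dpart \<tau> j p k z \<noteq> 0" using y zj zy cocycle_nz[OF c] by (simp add: dpart_def)
    then show ?thesis by (auto simp: tga_zero_def)
  qed
  show "dind j p \<noteq> {}" if "p \<noteq> tga_zero"
    using that by (auto simp: dind_def tga_zero_def fun_eq_iff)
qed

context L begin

lemma aq_add_r: "actQ v (x + y) = actQ v x + actQ v y"
  using mf by (simp add: module_of_fractions_def)
lemma aq_add_l: "actQ (v + w) x = actQ v x + actQ w x"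
  using mf by (simp add: module_of_fractions_def)
lemma aq_mult: "actQ v (x * y) = actQ (actQ v x) y"
  using mf by (simp add: module_of_fractions_def)
lemma aq_one[simp]: "actQ v 1 = v"
  using mf by (simp add: module_of_fractions_def)
lemma iota_add: "\<iota> (m + m') = \<iota> m + \<iota> m'"
  using mf by (simp add: module_of_fractions_def)
lemma iota_act: "a \<in> C \<Longrightarrow> \<iota> (act m a) = actQ (\<iota> m) (\<phi> a)"
  using mf by (simp add: module_of_fractions_def)
lemma iota_frac: "\<exists>m. \<exists>s\<in>S. \<exists>t. \<phi> s * t = 1 \<and> v = actQ (\<iota> m) t"
  using mf by (simp add: module_of_fractions_def)
lemma iota_ker: "\<iota> m = 0 \<longleftrightarrow> (\<exists>s\<in>S. act m s = 0)"
  using mf by (simp add: module_of_fractions_def)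

lemma aq_zero_r[simp]: "actQ v 0 = 0"
  using aq_add_r[of v 0 0] by simp
lemma aq_zero_l[simp]: "actQ 0 x = 0"
  using aq_add_l[of 0 0 x] by simp
lemma aq_neg_l: "actQ (- v) x = - actQ v x"
  using aq_add_l[of v "- v" x] by (simp add: add_eq_0_iff)
lemma aq_sum_l: "actQ (\<Sum>g\<in>G. f g) x = (\<Sum>g\<in>G. actQ (f g) x)"
  by (induction G rule: infinite_finite_induct) (auto simp: aq_add_l)
lemma aq_sum_r: "actQ v (\<Sum>g\<in>G. f g) = (\<Sum>g\<in>G. actQ v (f g))"
  by (induction G rule: infinite_finite_induct) (auto simp: aq_add_r)
lemma iota_zero[simp]: "\<iota> 0 = 0"
  using iota_add[of 0 0] by simp
lemma iota_sum: "\<iota> (\<Sum>g\<in>G. f g) = (\<Sum>g\<in>G. \<iota> (f g))"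
  by (induction G rule: infinite_finite_induct) (auto simp: iota_add)

definition SpanD :: "'v set \<Rightarrow> 'v set" where
  "SpanD T = {x. \<exists>c. (\<forall>u\<in>T. c u \<in> D) \<and> x = (\<Sum>u\<in>T. actQ u (c u))}"

lemma SpanD_I: "(\<forall>u\<in>T. c u \<in> D) \<Longrightarrow> x = (\<Sum>u\<in>T. actQ u (c u)) \<Longrightarrow> x \<in> SpanD T"
  unfolding SpanD_def by blast

lemma span_zero: "0 \<in> SpanD T"
  unfolding SpanD_def using D_zero by (intro CollectI exI[of _ "\<lambda>_. 0"]) auto

lemma span_add: "x \<in> SpanD T \<Longrightarrow> y \<in> SpanD T \<Longrightarrow> x + y \<in> SpanD T"
proof -
  assume "x \<in> SpanD T" "y \<in> SpanD T"
  then obtain c c' where c: "\<forall>u\<in>T. c u \<in> D" "x = (\<Sum>u\<in>T. actQ u (c u))"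
    and c': "\<forall>u\<in>T. c' u \<in> D" "y = (\<Sum>u\<in>T. actQ u (c' u))" by (auto simp: SpanD_def)
  have "x + y = (\<Sum>u\<in>T. actQ u (c u + c' u))" using c c' by (simp add: aq_add_r sum.distrib)
  moreover have "\<forall>u\<in>T. c u + c' u \<in> D" using c c' D_add by blast
  ultimately show ?thesis using SpanD_I[of T "\<lambda>u. c u + c' u"] by simp
qed

lemma span_sum: "(\<And>k. k \<in> K \<Longrightarrow> f k \<in> SpanD T) \<Longrightarrow> (\<Sum>k\<in>K. f k) \<in> SpanD T"
  by (induction K rule: infinite_finite_induct) (auto simp: span_zero span_add)

lemma span_scale: "x \<in> SpanD T \<Longrightarrow> d \<in> D \<Longrightarrow> actQ x d \<in> SpanD T"
proof -
  assume "x \<in> SpanD T" "d \<in> D"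
  then obtain c where c: "\<forall>u\<in>T. c u \<in> D" "x = (\<Sum>u\<in>T. actQ u (c u))" by (auto simp: SpanD_def)
  have "actQ x d = (\<Sum>u\<in>T. actQ u (c u * d))" using c by (simp add: aq_sum_l aq_mult)
  moreover have "\<forall>u\<in>T. c u * d \<in> D" using c \<open>d \<in> D\<close> D_mult by blast
  ultimately show ?thesis using SpanD_I[of T "\<lambda>u. c u * d"] by simp
qed

lemma span_neg: "x \<in> SpanD T \<Longrightarrow> - x \<in> SpanD T"
proof -
  assume "x \<in> SpanD T"
  then have "actQ x (- 1) \<in> SpanD T" using span_scale D_uminus D_one by blast
  moreover have "actQ x (- 1) = - x" using aq_add_r[of x 1 "-1"] by (simp add: add_eq_0_iff)
  ultimately show ?thesis by simp
qed

lemma span_base: "finite T \<Longrightarrow> u \<in> T \<Longrightarrow> d \<in> D \<Longrightarrow> actQ u d \<in> SpanD T"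
proof -
  assume T: "finite T" "u \<in> T" "d \<in> D"
  have "(\<Sum>v\<in>T. actQ v (if v = u then d else 0)) = actQ u d"
    using T by (simp add: if_distrib sum.delta cong: if_cong)
  moreover have "\<forall>v\<in>T. (if v = u then d else 0) \<in> D" using T D_zero by auto
  ultimately show ?thesis using SpanD_I[of T "\<lambda>v. if v = u then d else 0"] by simp
qed

lemma span_trans: "finite T' \<Longrightarrow> (\<And>u. u \<in> T \<Longrightarrow> u \<in> SpanD T') \<Longrightarrow> x \<in> SpanD T \<Longrightarrow> x \<in> SpanD T'"
proof -
  assume T': "finite T'" and u: "\<And>u. u \<in> T \<Longrightarrow> u \<in> SpanD T'" and "x \<in> SpanD T"
  then obtain c where c: "\<forall>u\<in>T. c u \<in> D" "x = (\<Sum>u\<in>T. actQ u (c u))" by (auto simp: SpanD_def)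
  show ?thesis unfolding c(2) by (rule span_sum) (use u c(1) span_scale in blast)
qed

lemma span_mono: "finite T' \<Longrightarrow> T \<subseteq> T' \<Longrightarrow> x \<in> SpanD T \<Longrightarrow> x \<in> SpanD T'"
  by (rule span_trans) (auto intro: span_base[where d = 1, simplified] D_one)

end



context L begin

abbreviation X :: "'i \<Rightarrow> int \<Rightarrow> ('i \<Rightarrow> int) \<Rightarrow> 'f" where "X j k \<equiv> pt (ejk j k) 1"

lemma X_C: "X j k \<in> C" by (simp add: carrier_pt)
lemma scalar_C: "tga_scalar \<tau> u \<in> C" by (simp add: scalar_pt carrier_pt)

lemma act_XX: "act (act m (X j k)) (X j l) = act (act m (X j (k + l))) (tga_scalar \<tau> (\<tau> (ejk j k) (ejk j l)))"
proof -
  have "act (act m (X j k)) (X j l) = act m (tga_mult \<tau> (X j k) (X j l))" by (simp add: act_mult X_C)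
  also have "tga_mult \<tau> (X j k) (X j l) = pt (ejk j (k + l)) (\<tau> (ejk j k) (ejk j l))"
    by (simp add: mult_pt_pt gadd_ejk)
  also have "\<dots> = tga_mult \<tau> (X j (k + l)) (tga_scalar \<tau> (\<tau> (ejk j k) (ejk j l)))"
    by (simp add: mult_pt_scalar[OF coc])
  also have "act m \<dots> = act (act m (X j (k + l))) (tga_scalar \<tau> (\<tau> (ejk j k) (ejk j l)))"
    by (simp add: act_mult X_C scalar_C)
  finally show ?thesis .
qed

lemma rel:
  assumes jI: "j \<notin> I" and s: "s \<in> tga_carrier (subgrp (insert j I))" and ms: "act m s = 0"
  shows "\<exists>\<sigma>. (\<forall>k\<in>dind j s. \<sigma> k \<in> S) \<and>
     (\<Sum>k\<in>dind j s. actQ (\<iota> (act m (X j (k + l)))) (\<phi> (\<sigma> k))) = 0"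
proof -
  let ?K = "dind j s" and ?sk = "dpart \<tau> j s"
  note dc = decomp[OF coc s jI]
  define sk' where "sk' k = (\<lambda>z. ?sk k z * \<tau> z (ejk j l) / \<tau> (ejk j l) z)" for k
  define \<sigma> where "\<sigma> k = (\<lambda>z. \<tau> (ejk j k) (ejk j l) * sk' k z)" for k
  have skC: "?sk k \<in> C" for k using dc(2) cI_C by blast
  have sk'I: "sk' k \<in> tga_carrier (subgrp I)" for k
    unfolding sk'_def using conj_lemma(2)[OF dc(2) coc coc] by blast
  have sk'C: "sk' k \<in> C" for k using sk'I cI_C by blast
  have conj: "tga_mult \<tau> (?sk k) (X j l) = tga_mult \<tau> (X j l) (sk' k)" for k
    unfolding sk'_def using conj_lemma(1)[OF dc(2) coc] by blast
  have \<sigma>eq: "tga_mult \<tau> (tga_scalar \<tau> (\<tau> (ejk j k) (ejk j l))) (sk' k) = \<sigma> k" for k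
    by (simp add: mult_scalar_left[OF coc] \<sigma>_def)
  have \<sigma>I: "\<sigma> k \<in> tga_carrier (subgrp I)" for k
  proof -
    have "{z. \<sigma> k z \<noteq> 0} = {z. sk' k z \<noteq> 0}" using cocycle_nz[OF coc] by (auto simp: \<sigma>_def)
    then show ?thesis using sk'I[of k] by (simp add: tga_carrier_def)
  qed
  have \<sigma>S: "\<sigma> k \<in> S" if "k \<in> ?K" for k
  proof -
    have "sk' k \<noteq> tga_zero" unfolding sk'_def using conj_lemma(3)[OF dc(2) coc coc dc(4)[OF that]] by blast
    then obtain z where "sk' k z \<noteq> 0" by (auto simp: tga_zero_def)
    then have "\<sigma> k z \<noteq> 0" using cocycle_nz[OF coc] by (simp add: \<sigma>_def)
    then have "\<sigma> k \<noteq> tga_zero" by (auto simp: tga_zero_def)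
    then show ?thesis using \<sigma>I by (simp add: tga_nonzero_def)
  qed
  have termeq: "act (act (act m (X j k)) (?sk k)) (X j l) = act (act m (X j (k + l))) (\<sigma> k)" for k
  proof -
    have "act (act (act m (X j k)) (?sk k)) (X j l) = act (act m (X j k)) (tga_mult \<tau> (?sk k) (X j l))"
      by (simp add: act_mult skC X_C)
    also have "\<dots> = act (act m (X j k)) (tga_mult \<tau> (X j l) (sk' k))" by (simp add: conj)
    also have "\<dots> = act (act (act m (X j k)) (X j l)) (sk' k)" by (simp add: act_mult sk'C X_C)
    also have "\<dots> = act (act (act m (X j (k + l))) (tga_scalar \<tau> (\<tau> (ejk j k) (ejk j l)))) (sk' k)"
      by (simp add: act_XX)
    also have "\<dots> = act (act m (X j (k + l))) (\<sigma> k)"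
      by (simp add: act_mult[symmetric] scalar_C sk'C \<sigma>eq)
    finally show ?thesis .
  qed
  have mC: "tga_mult \<tau> (X j k) (?sk k) \<in> C" for k
    using carrier_mult[of "X j k" UNIV "?sk k" \<tau>] X_C skC by simp
  have "act m s = (\<Sum>k\<in>?K. act m (tga_mult \<tau> (X j k) (?sk k)))"
    by (subst dc(3)) (simp add: act_tsum[OF dc(1)] mC)
  also have "\<dots> = (\<Sum>k\<in>?K. act (act m (X j k)) (?sk k))" by (simp add: act_mult X_C skC)
  finally have "0 = act (\<Sum>k\<in>?K. act (act m (X j k)) (?sk k)) (X j l)" using ms by (simp add: X_C)
  also have "\<dots> = (\<Sum>k\<in>?K. act (act m (X j (k + l))) (\<sigma> k))"
    by (simp add: act_sum_l X_C termeq)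
  finally have "\<iota> 0 = \<iota> (\<Sum>k\<in>?K. act (act m (X j (k + l))) (\<sigma> k))" by simp
  moreover have "\<iota> (act (act m (X j (k + l))) (\<sigma> k)) = actQ (\<iota> (act m (X j (k + l)))) (\<phi> (\<sigma> k))" for k
    using \<sigma>I[of k] cI_C iota_act by blast
  ultimately have "0 = (\<Sum>k\<in>?K. actQ (\<iota> (act m (X j (k + l)))) (\<phi> (\<sigma> k)))"
    by (simp add: iota_sum)
  then show ?thesis using \<sigma>S by (intro exI[of _ \<sigma>]) auto
qed

lemma solve_one:
  assumes fin: "finite K" and h: "h \<in> K" and sig: "\<forall>k\<in>K. \<sigma> k \<in> S"
    and eq: "(\<Sum>k\<in>K. actQ (w k) (\<phi> (\<sigma> k))) = 0"
    and fT: "finite T"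
    and ih: "\<And>k. k \<in> K - {h} \<Longrightarrow> w k \<in> SpanD T"
  shows "w h \<in> SpanD T"
proof -
  obtain t where t: "\<phi> (\<sigma> h) * t = 1" using phi_unit sig h by blast
  have "actQ (w h) (\<phi> (\<sigma> h)) + (\<Sum>k\<in>K - {h}. actQ (w k) (\<phi> (\<sigma> k))) = 0"
    using eq fin h by (simp add: sum.remove)
  then have e: "actQ (w h) (\<phi> (\<sigma> h)) = - (\<Sum>k\<in>K - {h}. actQ (w k) (\<phi> (\<sigma> k)))"
    by (simp add: eq_neg_iff_add_eq_0)
  have "w h = actQ (actQ (w h) (\<phi> (\<sigma> h))) t" by (simp add: aq_mult[symmetric] t)
  also have "\<dots> = - (\<Sum>k\<in>K - {h}. actQ (actQ (w k) (\<phi> (\<sigma> k))) t)"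
    by (simp add: e aq_neg_l aq_sum_l)
  finally have wh: "w h = - (\<Sum>k\<in>K - {h}. actQ (actQ (w k) (\<phi> (\<sigma> k))) t)" .
  have tD: "t \<in> D" using D_inv sig h t by blast
  have "(\<Sum>k\<in>K - {h}. actQ (actQ (w k) (\<phi> (\<sigma> k))) t) \<in> SpanD T"
  proof (rule span_sum)
    fix k assume k: "k \<in> K - {h}"
    then have "\<phi> (\<sigma> k) \<in> D" using sig D_phi S_carrier by blast
    then show "actQ (actQ (w k) (\<phi> (\<sigma> k))) t \<in> SpanD T"
      using span_scale ih[OF k] tD by blast
  qed
  then show ?thesis using wh span_neg by simp
qed

lemma window:
  assumes jI: "j \<notin> I" and tor: "\<exists>s\<in>tga_carrier (subgrp (insert j I)). s \<noteq> tga_zero \<and> act m s = 0"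
  shows "\<exists>lo hi. \<forall>N. \<iota> (act m (X j N)) \<in> SpanD ((\<lambda>i. \<iota> (act m (X j i))) ` {lo..<hi})"
proof -
  obtain s where s: "s \<in> tga_carrier (subgrp (insert j I))" "s \<noteq> tga_zero" "act m s = 0" using tor by blast
  note dc = decomp[OF coc s(1) jI]
  let ?K = "dind j s"
  define w where "w i = \<iota> (act m (X j i))" for i
  define lo where "lo = Min ?K"
  define hi where "hi = Max ?K"
  have ne: "?K \<noteq> {}" using dc(5) s(2) by blast
  have loK: "lo \<in> ?K" and hiK: "hi \<in> ?K" using ne dc(1) by (auto simp: lo_def hi_def)
  have bnd: "k \<in> ?K \<Longrightarrow> lo \<le> k \<and> k \<le> hi" for k using dc(1) by (auto simp: lo_def hi_def)
  define W where "W = w ` {lo..<hi}"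
  have fW: "finite W" by (simp add: W_def)
  have relw: "\<exists>\<sigma>. (\<forall>k\<in>?K. \<sigma> k \<in> S) \<and> (\<Sum>k\<in>?K. actQ (w (k + l)) (\<phi> (\<sigma> k))) = 0" for l
    using rel[OF jI s(1) s(3), of l] by (simp add: w_def)
  have inW: "lo \<le> N \<Longrightarrow> N < hi \<Longrightarrow> w N \<in> SpanD W" for N
    using span_base[OF fW, of "w N" 1] D_one by (simp add: W_def)
  have up: "lo \<le> N \<Longrightarrow> w N \<in> SpanD W" for N
  proof (induction "nat (N - lo)" arbitrary: N rule: less_induct)
    case less
    show ?case
    proof (cases "N < hi")
      case True then show ?thesis using inW less.prems by blast
    next
      case False
      define l where "l = N - hi"
      obtain \<sigma> where \<sigma>: "\<forall>k\<in>?K. \<sigma> k \<in> S" "(\<Sum>k\<in>?K. actQ (w (k + l)) (\<phi> (\<sigma> k))) = 0"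
        using relw by blast
      have "w (hi + l) \<in> SpanD W"
      proof (rule solve_one[OF dc(1) hiK \<sigma>(1) \<sigma>(2) fW])
        fix k assume k: "k \<in> ?K - {hi}"
        then have "lo \<le> k" "k < hi" using bnd by force+
        then show "w (k + l) \<in> SpanD W" using less.hyps[of "k + l"] False less.prems
          by (simp add: l_def)
      qed
      then show ?thesis by (simp add: l_def)
    qed
  qed
  have down: "N < hi \<Longrightarrow> w N \<in> SpanD W" for N
  proof (induction "nat (hi - N)" arbitrary: N rule: less_induct)
    case less
    show ?case
    proof (cases "lo \<le> N")
      case True then show ?thesis using up by blast
    next
      case False
      define l where "l = N - lo"
      obtain \<sigma> where \<sigma>: "\<forall>k\<in>?K. \<sigma> k \<in> S" "(\<Sum>k\<in>?K. actQ (w (k + l)) (\<phi> (\<sigma> k))) = 0"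
        using relw by blast
      have "w (lo + l) \<in> SpanD W"
      proof (rule solve_one[OF dc(1) loK \<sigma>(1) \<sigma>(2) fW])
        fix k assume k: "k \<in> ?K - {lo}"
        then have "lo < k" "k \<le> hi" using bnd by force+
        then show "w (k + l) \<in> SpanD W" using less.hyps[of "k + l"] False less.prems
          by (simp add: l_def)
      qed
      then show ?thesis by (simp add: l_def)
    qed
  qed
  have "w N \<in> SpanD W" for N
  proof (cases "lo \<le> N")
    case True then show ?thesis using up by blast
  next
    case False
    then have "N < hi" using bnd[OF loK] by simp
    then show ?thesis using down by blast
  qed
  then show ?thesis unfolding W_def w_def by blast
qed

end



context L begin

lemma reach:
  assumes fJ: "finite J'" and dis: "J' \<inter> I = {}"
    and tors: "\<And>j m. j \<notin> I \<Longrightarrow> \<exists>s\<in>tga_carrier (subgrp (insert j I)). s \<noteq> tga_zero \<and> act m s = 0"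
  shows "\<forall>m. \<exists>T. finite T \<and> (\<forall>a\<in>tga_carrier (subgrp (I \<union> J')). actQ (\<iota> m) (\<phi> a) \<in> SpanD T)"
  using fJ dis
proof (induction J' rule: finite_induct)
  case empty
  show ?case
  proof
    fix m
    have "actQ (\<iota> m) (\<phi> a) \<in> SpanD {\<iota> m}" if "a \<in> tga_carrier (subgrp (I \<union> {}))" for a
      using span_base[of "{\<iota> m}" "\<iota> m" "\<phi> a"] D_phi that by simp
    then show "\<exists>T. finite T \<and> (\<forall>a\<in>tga_carrier (subgrp (I \<union> {})). actQ (\<iota> m) (\<phi> a) \<in> SpanD T)"
      by (intro exI[of _ "{\<iota> m}"]) auto
  qed
next
  case (insert j J')
  define K where "K = I \<union> J'"
  have jI: "j \<notin> I" and jK: "j \<notin> K" using insert by (auto simp: K_def)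
  have IK: "I \<subseteq> K" by (simp add: K_def)
  have eqK: "I \<union> insert j J' = insert j K" by (auto simp: K_def)
  from insert.IH insert.prems have IH: "\<forall>m. \<exists>T. finite T \<and> (\<forall>a\<in>tga_carrier (subgrp K). actQ (\<iota> m) (\<phi> a) \<in> SpanD T)"
    by (simp add: K_def)
  then obtain Tf where Tf: "\<And>m. finite (Tf m)" "\<And>m a. a \<in> tga_carrier (subgrp K) \<Longrightarrow> actQ (\<iota> m) (\<phi> a) \<in> SpanD (Tf m)"
    by metis
  show ?case
  proof
    fix m
    obtain lo hi where win: "\<And>N. \<iota> (act m (X j N)) \<in> SpanD ((\<lambda>i. \<iota> (act m (X j i))) ` {lo..<hi})"
      using window[OF jI tors[OF jI]] by blast
    define W where "W = (\<lambda>i. \<iota> (act m (X j i))) ` {lo..<hi}"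
    define T where "T = (\<Union>i\<in>{lo..<hi}. Tf (act m (X j i)))"
    have fT: "finite T" using Tf(1) by (simp add: T_def)
    have key: "actQ x (\<phi> b) \<in> SpanD T" if x: "x \<in> SpanD W" and b: "b \<in> tga_carrier (subgrp K)" for x b
    proof -
      obtain c where c: "\<forall>u\<in>W. c u \<in> D" "x = (\<Sum>u\<in>W. actQ u (c u))" using x by (auto simp: SpanD_def)
      have "actQ x (\<phi> b) = (\<Sum>u\<in>W. actQ u (c u * \<phi> b))" using c(2) by (simp add: aq_sum_l aq_mult)
      also have "\<dots> \<in> SpanD T"
      proof (rule span_sum)
        fix u assume u: "u \<in> W"
        then obtain i where i: "i \<in> {lo..<hi}" "u = \<iota> (act m (X j i))" by (auto simp: W_def)
        obtain b1 s1 t1 where 1: "c u = \<phi> b1 * t1" "b1 \<in> tga_carrier (subgrp I)" "s1 \<in> S" "\<phi> s1 * t1 = 1"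
          using c(1) u by (auto simp: quot_div_def)
        obtain a' s' t' where o: "a' \<in> tga_carrier (subgrp K)" "s' \<in> S" "\<phi> s' * t' = 1" "t1 * \<phi> b = \<phi> a' * t'"
          using ore[OF 1(3,4) IK b] by blast
        have b1K: "b1 \<in> tga_carrier (subgrp K)" using 1(2) subgrp_mono[OF IK] carrier_mono by blast
        have pK: "tga_mult \<tau> b1 a' \<in> tga_carrier (subgrp K)" using carrier_mult_subgrp b1K o(1) by blast
        have "c u * \<phi> b = \<phi> b1 * \<phi> a' * t'" using 1(1) o(4) by (simp add: mult.assoc)
        also have "\<dots> = \<phi> (tga_mult \<tau> b1 a') * t'" using phi_mult cI_C 1(2) o(1) by metis
        finally have cu: "c u * \<phi> b = \<phi> (tga_mult \<tau> b1 a') * t'" .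
        have "actQ (\<iota> (act m (X j i))) (\<phi> (tga_mult \<tau> b1 a')) \<in> SpanD (Tf (act m (X j i)))"
          using Tf(2)[OF pK] .
        moreover have sub: "Tf (act m (X j i)) \<subseteq> T" using i(1) unfolding T_def by blast
        ultimately have "actQ (\<iota> (act m (X j i))) (\<phi> (tga_mult \<tau> b1 a')) \<in> SpanD T"
          using span_mono[OF fT sub] by blast
        then have "actQ (actQ (\<iota> (act m (X j i))) (\<phi> (tga_mult \<tau> b1 a'))) t' \<in> SpanD T"
          using span_scale D_inv o(2,3) by blast
        then show "actQ u (c u * \<phi> b) \<in> SpanD T" using i(2) cu by (simp add: aq_mult)
      qed
      finally show ?thesis .
    qed
    have "actQ (\<iota> m) (\<phi> a) \<in> SpanD T" if a: "a \<in> tga_carrier (subgrp (I \<union> insert j J'))" for a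
    proof -
      have a': "a \<in> tga_carrier (subgrp (insert j K))" using a eqK by simp
      note dc = decomp[OF coc a' jK]
      have akC: "dpart \<tau> j a k \<in> C" for k using dc(2) cI_C by blast
      have mC: "tga_mult \<tau> (X j k) (dpart \<tau> j a k) \<in> C" for k
        using carrier_mult[of "X j k" UNIV "dpart \<tau> j a k" \<tau>] X_C akC by simp
      have "\<phi> a = (\<Sum>k\<in>dind j a. \<phi> (tga_mult \<tau> (X j k) (dpart \<tau> j a k)))"
        by (subst dc(3)) (simp add: phi_tsum[OF dc(1)] mC)
      also have "\<dots> = (\<Sum>k\<in>dind j a. \<phi> (X j k) * \<phi> (dpart \<tau> j a k))"
        by (simp add: phi_mult X_C akC)
      finally have "actQ (\<iota> m) (\<phi> a) = (\<Sum>k\<in>dind j a. actQ (actQ (\<iota> m) (\<phi> (X j k))) (\<phi> (dpart \<tau> j a k)))"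
        by (simp add: aq_sum_r aq_mult)
      also have "\<dots> = (\<Sum>k\<in>dind j a. actQ (\<iota> (act m (X j k))) (\<phi> (dpart \<tau> j a k)))"
        by (simp add: iota_act X_C)
      also have "\<dots> \<in> SpanD T"
        by (rule span_sum, rule key) (use win dc(2) in \<open>auto simp: W_def\<close>)
      finally show ?thesis .
    qed
    then show "\<exists>T. finite T \<and> (\<forall>a\<in>tga_carrier (subgrp (I \<union> insert j J')). actQ (\<iota> m) (\<phi> a) \<in> SpanD T)"
      using fT by blast
  qed
qed

lemma all_span:
  assumes fin: "finite (UNIV :: 'i set)" and fg: "fin_gen_module act"
    and tors: "\<And>j m. j \<notin> I \<Longrightarrow> \<exists>s\<in>tga_carrier (subgrp (insert j I)). s \<noteq> tga_zero \<and> act m s = 0"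
  shows "\<exists>T. finite T \<and> (\<forall>v. v \<in> SpanD T)"
proof -
  have "\<forall>m. \<exists>T. finite T \<and> (\<forall>a\<in>tga_carrier (subgrp (I \<union> (UNIV - I))). actQ (\<iota> m) (\<phi> a) \<in> SpanD T)"
    by (rule reach) (use fin tors in auto)
  then have "\<forall>m. \<exists>T. finite T \<and> (\<forall>a\<in>C. actQ (\<iota> m) (\<phi> a) \<in> SpanD T)"
    by (simp add: subgrp_UNIV)
  then obtain Tf where Tf: "\<And>m. finite (Tf m)" "\<And>m a. a \<in> C \<Longrightarrow> actQ (\<iota> m) (\<phi> a) \<in> SpanD (Tf m)"
    by metis
  obtain G where G: "finite G" "\<And>m. \<exists>c. (\<forall>g\<in>G. c g \<in> C) \<and> m = (\<Sum>g\<in>G. act g (c g))"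
    using fg by (auto simp: fin_gen_module_def)
  define T where "T = (\<Union>g\<in>G. Tf g)"
  have fT: "finite T" using G(1) Tf(1) by (simp add: T_def)
  have "v \<in> SpanD T" for v
  proof -
    obtain m s t where v: "s \<in> S" "\<phi> s * t = 1" "v = actQ (\<iota> m) t" using iota_frac by blast
    obtain c where c: "\<forall>g\<in>G. c g \<in> C" "m = (\<Sum>g\<in>G. act g (c g))" using G(2) by blast
    have "\<iota> m = (\<Sum>g\<in>G. actQ (\<iota> g) (\<phi> (c g)))" using c by (simp add: iota_sum iota_act)
    also have "\<dots> \<in> SpanD T"
    proof (rule span_sum)
      fix g assume "g \<in> G"
      then have sub: "Tf g \<subseteq> T" unfolding T_def by blast
      have "actQ (\<iota> g) (\<phi> (c g)) \<in> SpanD (Tf g)" using Tf(2)[of "c g" g] c(1) \<open>g \<in> G\<close> by blast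
      then show "actQ (\<iota> g) (\<phi> (c g)) \<in> SpanD T" using span_mono[OF fT sub] by blast
    qed
    finally have "\<iota> m \<in> SpanD T" .
    then show ?thesis using v span_scale D_inv by blast
  qed
  then show ?thesis using fT by blast
qed

end



lemma prod_pts:
  "\<exists>l. l \<noteq> 0 \<and> tga_prod \<tau> (map (\<lambda>t. pt (f t) 1) xs) = pt (\<lambda>i. sum_list (map (\<lambda>t. f t i) xs)) l"
  if c: "two_cocycle \<tau>"
proof (induction xs)
  case Nil
  show ?case using cocycle_nz[OF c, of gzero gzero]
    by (intro exI[of _ "1 / \<tau> gzero gzero"]) (simp add: tga_prod_def one_pt gzero_def)
next
  case (Cons x xs)
  then obtain l where l: "l \<noteq> 0" "tga_prod \<tau> (map (\<lambda>t. pt (f t) 1) xs) = pt (\<lambda>i. sum_list (map (\<lambda>t. f t i) xs)) l"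
    by blast
  have "tga_prod \<tau> (map (\<lambda>t. pt (f t) 1) (x # xs)) = tga_mult \<tau> (pt (f x) 1) (tga_prod \<tau> (map (\<lambda>t. pt (f t) 1) xs))"
    by (simp add: tga_prod_def)
  also have "\<dots> = pt (gadd (f x) (\<lambda>i. sum_list (map (\<lambda>t. f t i) xs))) (1 * l * \<tau> (f x) (\<lambda>i. sum_list (map (\<lambda>t. f t i) xs)))"
    by (simp add: l(2) mult_pt_pt)
  also have "gadd (f x) (\<lambda>i. sum_list (map (\<lambda>t. f t i) xs)) = (\<lambda>i. sum_list (map (\<lambda>t. f t i) (x # xs)))"
    by (simp add: gadd_def)
  finally show ?case using l(1) cocycle_nz[OF c] by (intro exI[of _ "1 * l * \<tau> (f x) (\<lambda>i. sum_list (map (\<lambda>t. f t i) xs))"]) auto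
qed

lemma count_bits: "0 \<le> c \<Longrightarrow> c \<le> int k \<Longrightarrow> sum_list (map (\<lambda>t. if int t < c then 1 else 0) [0..<k]) = (c::int)"
proof -
  assume c: "0 \<le> c" "c \<le> int k"
  have "sum_list (map (\<lambda>t. if int t < c then 1 else 0) [0..<k]) = (\<Sum>t\<in>{0..<k}. if int t < c then 1 else (0::int))"
    by (induction k) auto
  also have "\<dots> = (\<Sum>t\<in>{t\<in>{0..<k}. int t < c}. 1)"
    by (rule sum.inter_filter[symmetric]) simp
  also have "{t\<in>{0..<k}. int t < c} = {0..<nat c}" using c by auto
  finally show ?thesis using c by simp
qed

context L begin

abbreviation "sc \<equiv> (\<lambda>c x. act x (tga_scalar \<tau> c))"

lemma scalar_add: "tga_scalar \<tau> (a + b) = tga_add (tga_scalar \<tau> a) (tga_scalar \<tau> b)"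
  by (simp add: tga_scalar_def tga_add_def fun_eq_iff add_divide_distrib)

lemma scalar_mult: "tga_mult \<tau> (tga_scalar \<tau> b) (tga_scalar \<tau> a) = tga_scalar \<tau> (a * b)"
  unfolding mult_scalar_left[OF coc] by (rule ext) (simp add: tga_scalar_def)

lemma vs: "vector_space sc"
proof
  fix a b :: 'f and x y :: 'm
  show "sc a (x + y) = sc a x + sc a y" by (simp add: act_add_l scalar_C)
  show "sc (a + b) x = sc a x + sc b x" by (simp add: scalar_add act_add_r scalar_C)
  show "sc a (sc b x) = sc (a * b) x" by (simp add: act_mult[symmetric] scalar_C scalar_mult)
  show "sc 1 x = x" using act_one by (simp add: tga_one_def)
qed

lemma Fspan_eq: "Fspan \<tau> act Y = module.span sc Y"
proof -
  interpret VS: vector_space sc by (rule vs)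
  show ?thesis by (simp add: Fspan_def VS.span_explicit)
qed


lemma Fdim_lower:
  assumes fG: "finite G" and ind: "\<not> module.dependent sc E" and EG: "E \<subseteq> G"
  shows "card E \<le> Fdim \<tau> act (Fspan \<tau> act G)"
proof -
  interpret VS: vector_space sc by (rule vs)
  let ?P = "\<lambda>k. \<exists>T. finite T \<and> card T = k \<and> T \<subseteq> Fspan \<tau> act (Fspan \<tau> act G) \<and>
                       Fspan \<tau> act (Fspan \<tau> act G) \<subseteq> Fspan \<tau> act T"
  have "?P (card G)"
    using fG by (intro exI[of _ G]) (auto simp: Fspan_eq VS.span_span VS.span_superset)
  then have "?P (Fdim \<tau> act (Fspan \<tau> act G))" unfolding Fdim_def by (rule LeastI)
  then obtain T where T: "finite T" "card T = Fdim \<tau> act (Fspan \<tau> act G)"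
    "Fspan \<tau> act (Fspan \<tau> act G) \<subseteq> Fspan \<tau> act T" by blast
  have "E \<subseteq> VS.span T" using T(3) EG VS.span_superset unfolding Fspan_eq VS.span_span by blast
  then show ?thesis using VS.independent_span_bound[OF T(1) ind] T(2) by simp
qed

end



context L begin

lemma act_pt_neg: "act m (pt a (- l)) = - act m (pt a l)"
proof -
  interpret VS: vector_space sc by (rule vs)
  have "act m (pt a (- l)) = act m (tga_mult \<tau> (pt a l) (tga_scalar \<tau> (-1)))"
    by (simp add: mult_pt_scalar[OF coc])
  also have "\<dots> = sc (-1) (act m (pt a l))" by (simp add: act_mult carrier_pt scalar_C)
  also have "\<dots> = - act m (pt a l)" using VS.scale_minus_left[where a=1] VS.scale_one by simp
  finally show ?thesis .
qed

lemma box_card: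
  assumes fJ: "finite (J :: 'i set)"
  shows "finite {a. a \<in> subgrp J \<and> (\<forall>i. 0 \<le> a i \<and> a i \<le> int k)}"
    and "card {a. a \<in> subgrp J \<and> (\<forall>i. 0 \<le> a i \<and> a i \<le> int k)} = (k + 1) ^ card J"
proof -
  let ?B = "{a. a \<in> subgrp J \<and> (\<forall>i. 0 \<le> a i \<and> a i \<le> int k)}"
  let ?P = "PiE J (\<lambda>_. {0..int k})"
  define g where "g f = (\<lambda>i. if i \<in> J then f i else (0::int))" for f :: "'i \<Rightarrow> int"
  have inj: "inj_on g ?P"
  proof
    fix f f' assume f: "f \<in> ?P" "f' \<in> ?P" "g f = g f'"
    show "f = f'"
    proof
      fix i show "f i = f' i"
      proof (cases "i \<in> J")
        case True then show ?thesis using fun_cong[OF f(3), of i] by (simp add: g_def)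
      next
        case False then show ?thesis using PiE_arb[OF f(1) False] PiE_arb[OF f(2) False] by simp
      qed
    qed
  qed
  have eq: "?B = g ` ?P"
  proof
    show "?B \<subseteq> g ` ?P"
    proof
      fix a assume a: "a \<in> ?B"
      have "a = g (restrict a J)" using a by (auto simp: g_def subgrp_def fun_eq_iff)
      moreover have "restrict a J \<in> ?P" using a by auto
      ultimately show "a \<in> g ` ?P" by blast
    qed
    show "g ` ?P \<subseteq> ?B" by (auto simp: g_def subgrp_def PiE_def Pi_def)
  qed
  have fP: "finite ?P" using fJ by (simp add: finite_PiE)
  show "finite ?B" using eq fP by simp
  have "card ?B = card ?P" using eq card_image[OF inj] by simp
  also have "\<dots> = (k + 1) ^ card J" proof -
    have "nat (int k + 1) = Suc k" by simp
    then show ?thesis using fJ by (simp add: card_PiE)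
  qed
  finally show "card ?B = (k + 1) ^ card J" .
qed

lemma gk_big:
  assumes fin: "finite (UNIV :: 'i set)"
    and nt: "\<forall>s\<in>tga_carrier (subgrp J). s \<noteq> tga_zero \<longrightarrow> act m s \<noteq> 0"
  shows "ereal (real (card J)) \<le> gk \<tau> act"
proof -
  interpret VS: vector_space sc by (rule vs)
  have fJ: "finite J" using finite_subset[OF subset_UNIV fin] .
  let ?n = "card J"
  define BB where "BB = {b. b \<in> subgrp J \<and> (\<forall>i. b i = 0 \<or> b i = (1::int))}"
  define V0 where "V0 = (\<lambda>b. pt b (1::'f)) ` BB"
  have "BB \<subseteq> PiE UNIV (\<lambda>_. {0, 1})" by (auto simp: BB_def PiE_UNIV_domain)
  moreover have "finite (PiE UNIV (\<lambda>_::'i. {0, 1::int}))" by (rule finite_PiE[OF fin]) simp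
  ultimately have fBB: "finite BB" by (rule finite_subset)
  have fV0: "finite V0" using fBB by (simp add: V0_def)
  have V0C: "V0 \<subseteq> C" by (auto simp: V0_def carrier_pt)
  define Box where "Box k = {a. a \<in> subgrp J \<and> (\<forall>i. 0 \<le> a i \<and> a i \<le> int k)}" for k
  define bitv where "bitv a t = (\<lambda>i. if int t < a i then 1 else (0::int))" for a :: "'i \<Rightarrow> int" and t :: nat
  define vsa where "vsa k a = map (\<lambda>t. pt (bitv a t) (1::'f)) [0..<k]" for k a
  define gens where "gens k = {act w (tga_prod \<tau> vs) | w vs. w \<in> {m} \<and> length vs = k \<and> set vs \<subseteq> V0}" for k
  have prod_a: "\<exists>l. l \<noteq> 0 \<and> tga_prod \<tau> (vsa k a) = pt a l" if a: "a \<in> Box k" for k a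
  proof -
    obtain l where l: "l \<noteq> 0" "tga_prod \<tau> (vsa k a) = pt (\<lambda>i. sum_list (map (\<lambda>t. bitv a t i) [0..<k])) l"
      using prod_pts[OF coc, where f = "bitv a" and xs = "[0..<k]"] unfolding vsa_def by blast
    have "(\<lambda>i. sum_list (map (\<lambda>t. bitv a t i) [0..<k])) = a"
    proof
      fix i show "sum_list (map (\<lambda>t. bitv a t i) [0..<k]) = a i"
        using a count_bits[of "a i" k] by (simp add: Box_def bitv_def)
    qed
    then show ?thesis using l by auto
  qed
  define lam where "lam k a = (SOME l. l \<noteq> 0 \<and> tga_prod \<tau> (vsa k a) = pt a l)" for k a
  have lam: "lam k a \<noteq> 0" "tga_prod \<tau> (vsa k a) = pt a (lam k a)" if "a \<in> Box k" for k a
    using someI_ex[OF prod_a[OF that]] unfolding lam_def by blast+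
  define f where "f k a = act m (pt a (lam k a))" for k a
  have ingens: "f k a \<in> gens k" if "a \<in> Box k" for k a
  proof -
    have "set (vsa k a) \<subseteq> V0"
    proof
      fix v assume "v \<in> set (vsa k a)"
      then obtain t where "v = pt (bitv a t) 1" by (auto simp: vsa_def)
      moreover have "bitv a t \<in> BB" using that by (auto simp: bitv_def BB_def Box_def subgrp_def)
      ultimately show "v \<in> V0" by (simp add: V0_def)
    qed
    then show ?thesis unfolding gens_def f_def using lam(2)[OF that, symmetric]
      by (intro CollectI exI[of _ m] exI[of _ "vsa k a"]) (simp add: vsa_def)
  qed
  have fgens: "finite (gens k)" for k
  proof -
    have "gens k = (\<lambda>vs. act m (tga_prod \<tau> vs)) ` {vs. set vs \<subseteq> V0 \<and> length vs = k}"
      by (auto simp: gens_def)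
    then show ?thesis using finite_lists_length_eq[OF fV0] by simp
  qed
  have boxJ: "Box k \<subseteq> subgrp J" for k by (auto simp: Box_def)
  have fBox: "finite (Box k)" for k using box_card(1)[OF fJ] by (simp add: Box_def)
  have cBox: "card (Box k) = (k + 1) ^ ?n" for k using box_card(2)[OF fJ] by (simp add: Box_def)
  have injf: "inj_on (f k) (Box k)" for k
  proof
    fix a a' assume a: "a \<in> Box k" "a' \<in> Box k" "f k a = f k a'"
    show "a = a'"
    proof (rule ccontr)
      assume ne: "a \<noteq> a'"
      let ?d = "tga_add (pt a (lam k a)) (pt a' (- lam k a'))"
      have dJ: "?d \<in> tga_carrier (subgrp J)"
        using a boxJ by (intro carrier_add carrier_pt) auto
      have "act m ?d = f k a - f k a'"
        by (simp add: act_add_r carrier_pt act_pt_neg f_def)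
      then have "act m ?d = 0" using a(3) by simp
      moreover have "?d a \<noteq> 0" using ne lam(1)[OF a(1)] by (simp add: tga_add_def pt_def)
      then have "?d \<noteq> tga_zero" by (auto simp: tga_zero_def)
      ultimately show False using nt dJ by blast
    qed
  qed
  have indep: "\<not> VS.dependent (f k ` Box k)" for k
  proof
    assume "VS.dependent (f k ` Box k)"
    then obtain u where u: "\<exists>v\<in>f k ` Box k. u v \<noteq> 0" "(\<Sum>v\<in>f k ` Box k. sc (u v) v) = 0"
      using VS.dependent_finite[of "f k ` Box k"] fBox by auto
    define c where "c a = lam k a * u (f k a)" for a
    define e where "e = tsum (Box k) (\<lambda>a. pt a (c a))"
    have "(\<Sum>v\<in>f k ` Box k. sc (u v) v) = (\<Sum>a\<in>Box k. sc (u (f k a)) (f k a))"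
      by (simp add: sum.reindex[OF injf])
    also have "\<dots> = (\<Sum>a\<in>Box k. act m (pt a (c a)))"
      by (simp add: f_def c_def act_mult[symmetric] carrier_pt scalar_C mult_pt_scalar[OF coc])
    also have "\<dots> = act m e" unfolding e_def by (rule act_tsum[symmetric]) (auto simp: fBox carrier_pt)
    finally have me: "act m e = 0" using u(2) by simp
    have eJ: "e \<in> tga_carrier (subgrp J)" unfolding e_def using boxJ
      by (intro carrier_tsum fBox carrier_pt) auto
    obtain a0 where a0: "a0 \<in> Box k" "u (f k a0) \<noteq> 0" using u(1) by blast
    have "e a0 = (\<Sum>a\<in>Box k. if a0 = a then c a else 0)" by (simp add: e_def tsum_def pt_def)
    also have "\<dots> = c a0" using a0(1) fBox by simp
    finally have "e a0 \<noteq> 0" using a0 lam(1)[OF a0(1)] by (simp add: c_def)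
    then have "e \<noteq> tga_zero" by (auto simp: tga_zero_def)
    then show False using nt eJ me by blast
  qed
  have dbound: "(k + 1) ^ ?n \<le> Fdim \<tau> act (WVpow \<tau> act {m} V0 k)" for k
  proof -
    have "card (f k ` Box k) \<le> Fdim \<tau> act (Fspan \<tau> act (gens k))"
      by (rule Fdim_lower[OF fgens indep]) (use ingens in blast)
    moreover have "card (f k ` Box k) = (k + 1) ^ ?n" using card_image[OF injf] cBox by simp
    moreover have "WVpow \<tau> act {m} V0 k = Fspan \<tau> act (gens k)" by (simp add: WVpow_def gens_def)
    ultimately show ?thesis by simp
  qed
  have ev: "ereal (real ?n) \<le> (let d = Fdim \<tau> act (WVpow \<tau> act {m} V0 k) in
            if d = 0 then - \<infinity> else ereal (ln (real d) / ln (real k)))" if k2: "2 \<le> k" for k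
  proof -
    define d where "d = Fdim \<tau> act (WVpow \<tau> act {m} V0 k)"
    have dn: "(k + 1) ^ ?n \<le> d" using dbound[of k] by (simp add: d_def)
    have "0 < (k + 1) ^ ?n" by simp
    have db: "real ((k + 1) ^ ?n) \<le> real d" using dn by (simp only: of_nat_le_iff)
    have pos: "0 < real ((k + 1) ^ ?n)" by simp
    have dpos: "d \<noteq> 0" using dn \<open>0 < (k + 1) ^ ?n\<close> by linarith
    have lk: "0 < ln (real k)" using k2 by simp
    have "real ?n * ln (real k) \<le> real ?n * ln (real k + 1)" using k2 by (intro mult_left_mono) auto
    also have "\<dots> = ln (real ((k + 1) ^ ?n))" by (simp add: ln_realpow add.commute)
    also have "\<dots> \<le> ln (real d)" by (rule ln_mono[OF db pos])
    finally have "real ?n \<le> ln (real d) / ln (real k)" using lk by (simp add: pos_le_divide_eq)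
    then show ?thesis using dpos by (simp add: d_def[symmetric] Let_def)
  qed
  have "ereal (real ?n) \<le> limsup (\<lambda>k. let d = Fdim \<tau> act (WVpow \<tau> act {m} V0 k) in
            if d = 0 then - \<infinity> else ereal (ln (real d) / ln (real k)))"
    by (rule le_Limsup) (auto intro: eventually_sequentiallyI[of 2] ev)
  also have "\<dots> \<le> gk \<tau> act"
    unfolding gk_def
    by (rule SUP_upper2[of "({m}, V0)"]) (use fV0 V0C in auto)
  finally show ?thesis .
qed

end

theorem lemma3p3:
  fixes \<tau> :: "('i::finite \<Rightarrow> int) \<Rightarrow> ('i \<Rightarrow> int) \<Rightarrow> 'f::field"
    and act :: "'m::ab_group_add \<Rightarrow> (('i \<Rightarrow> int) \<Rightarrow> 'f) \<Rightarrow> 'm"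
    and r :: nat and I :: "'i set"
    and \<phi> :: "(('i \<Rightarrow> int) \<Rightarrow> 'f) \<Rightarrow> 'q::ring_1"
    and actQ :: "'v::ab_group_add \<Rightarrow> 'q \<Rightarrow> 'v"
    and \<iota> :: "'m \<Rightarrow> 'v"
  assumes "two_cocycle \<tau>"
    and "right_tga_module \<tau> act"
    and "fin_gen_module act"
    and "gk \<tau> act = ereal (real r)"
    and "0 < r" and "r < card (UNIV :: 'i set)"
    and "card I = r"
    and "\<not> tga_torsion act (subgrp I)"
    and "right_quotient_ring \<tau> (tga_nonzero (subgrp I)) \<phi>"
    and "module_of_fractions \<tau> act (tga_nonzero (subgrp I)) \<phi> actQ \<iota>"
  shows "(\<exists>v::'v. v \<noteq> 0) \<and>
         (\<exists>T. finite T \<and> (\<forall>v. \<exists>c. (\<forall>u\<in>T. c u \<in> quot_div (subgrp I) \<phi>) \<and>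
                                      v = (\<Sum>u\<in>T. actQ u (c u))))"
  proof -
  interpret L \<tau> act I \<phi> actQ \<iota>
    by (rule L.intro) (fact assms(1), fact assms(2), fact assms(9), fact assms(10))
  have fin: "finite (UNIV :: 'i set)" by simp
  have finI: "finite I" using finite_subset[OF subset_UNIV fin] .
  obtain m0 where m0: "\<forall>s\<in>tga_carrier (subgrp I). \<not> (s \<noteq> tga_zero \<and> act m0 s = 0)"
    using assms(8) unfolding tga_torsion_def by blast
  have "\<iota> m0 \<noteq> 0"
  proof
    assume "\<iota> m0 = 0"
    then obtain s where "s \<in> tga_nonzero (subgrp I)" "act m0 s = 0" using iota_ker by blast
    then show False using m0 by (auto simp: tga_nonzero_def)
  qed
  then have nz: "\<exists>v::'v. v \<noteq> 0" by blast
  have tors: "\<exists>s\<in>tga_carrier (subgrp (insert j I)). s \<noteq> tga_zero \<and> act m s = 0" if jI: "j \<notin> I" for j m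
  proof (rule ccontr)
    assume "\<not> ?thesis"
    then have "\<forall>s\<in>tga_carrier (subgrp (insert j I)). s \<noteq> tga_zero \<longrightarrow> act m s \<noteq> 0" by blast
    then have "ereal (real (card (insert j I))) \<le> gk \<tau> act" by (rule gk_big[OF fin])
    moreover have "card (insert j I) = r + 1" using finI jI assms(7) by simp
    ultimately have "ereal (real (r + 1)) \<le> ereal (real r)" using assms(4) by simp
    then show False by simp
  qed
  obtain T where T: "finite T" "\<forall>v. v \<in> SpanD T" using all_span[OF fin assms(3) tors] by blast
  have "\<forall>v. \<exists>c. (\<forall>u\<in>T. c u \<in> quot_div (subgrp I) \<phi>) \<and> v = (\<Sum>u\<in>T. actQ u (c u))"
    using T(2) unfolding SpanD_def by blast
  then show ?thesis using nz T(1) by blast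
qed

end
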